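(* The domain $\mathcal{SPL}$ of single-plateaued preferences is a maximal domain for own-peak-onliness, efficiency, the equal division guarantee, and not obvious manipulability (NOM). That is: $\mathcal{SP}\subseteq\mathcal{SPL}$; there exists a rule on $\mathcal{E}_{\mathcal{SPL}}$ satisfying these four properties; and for every domain $\overline{\mathcal{D}}$ with $\mathcal{SPL}\subsetneq\overline{\mathcal{D}}\subseteq\mathcal{U}$ there is no rule on $\mathcal{E}_{\overline{\mathcal{D}}}$ satisfying these four properties.
   Context: Let $N=\{1,\dots,n\}$ be a finite set of agents. $\mathcal{U}$ is the set of all continuous complete preorders $R_i$ on $\mathbb{R}_+\cup\{\infty\}$ ($P_i$ strict part, $I_i$ indifference). The peak is $p(R_i)=\{x:xR_iy\ \forall y\}$, $\underline{p}(R_i)=\inf p(R_i)$, $\overline{p}(R_i)=\sup p(R_i)$. $R_i$ is single-peaked if $p(R_i)$ is a singleton and for $x,x'\in\mathbb{R}_+$, $xP_ix'$ whenever $x'<x\le p(R_i)$ or $p(R_i)\le x<x'$ ($\mathcal{SP}$ = set of these). $R_i$ is single-plateaued if $p(R_i)=[\underline{p}(R_i),\overline{p}(R_i)]$ and for $x,x'\in\mathbb{R}_+$, $xP_ix'$ whenever $x'<x\le\underline{p}(R_i)$ or $\overline{p}(R_i)\le x<x'$ ($\mathcal{SPL}$ = set of these). For a domain $\mathcal{D}\subseteq\mathcal{U}$, an economy is $(R,\Omega)$ with $R\in\mathcal{D}^n$, $\Omega>0$, and $\mathcal{E}_{\mathcal{D}}$ is the set of these; a rule on $\mathcal{E}_{\mathcal{D}}$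 is a map $\varphi:\mathcal{E}_{\mathcal{D}}\to\mathbb{R}^n_+$ with $\sum_j\varphi_j(R,\Omega)=\Omega$. Properties (on $\mathcal{E}_{\mathcal{D}}$): Efficiency: no $x\in\mathbb{R}^n_+$ with $\sum_jx_j=\Omega$ has $x_iR_i\varphi_i(R,\Omega)$ for all $i$ and $x_iP_i\varphi_i(R,\Omega)$ for some $i$. Own-peak-onliness: for $R_i'\in\mathcal{D}$ with $p(R_i')=p(R_i)$, $\varphi_i(R,\Omega)=\varphi_i(R_i',R_{-i},\Omega)$. Equal division guarantee: if $\Omega/n\in p(R_i)$ then $\varphi_i(R,\Omega)I_i\Omega/n$. Option set $O^\varphi(R_i,\Omega)=\{\varphi_i(R_i,R_{-i},\Omega):R_{-i}\in\mathcal{D}^{n-1}\}$; $R_i'\in\mathcal{D}$ is a manipulation at $(R_i,\Omega)$ if $\varphi_i(R_i',R_{-i},\Omega)P_i\varphi_i(R_i,R_{-i},\Omega)$ for some $R_{-i}\in\mathcal{D}^{n-1}$, and an obvious manipulation if moreover each $x'\in O^\varphi(R_i',\Omega)$ satisfies $x'P_ix$ for some $x\in O^\varphi(R_i,\Omega)$; NOM means no obvious manipulation exists. *)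

theory Defs
  imports "HOL-Analysis.Analysis" "HOL-Library.Extended_Nonnegative_Real" "HOL-Library.FuncSet"
begin

text \<open>Consumption space R_+ \<union> {\<infinity>} is rendered as ennreal (order topology = [0,\<infinity>]).
  A preference is a binary relation R x y meaning "x R y" (x weakly preferred to y).\<close>

type_synonym pref = "ennreal \<Rightarrow> ennreal \<Rightarrow> bool"

definition strict :: "pref \<Rightarrow> ennreal \<Rightarrow> ennreal \<Rightarrow> bool" where
  "strict R x y \<longleftrightarrow> R x y \<and> \<not> R y x"

definition indiff :: "pref \<Rightarrow> ennreal \<Rightarrow> ennreal \<Rightarrow> bool" where
  "indiff R x y \<longleftrightarrow> R x y \<and> R y x"

definition complete_preorder :: "pref \<Rightarrow> bool" where
  "complete_preorder R \<longleftrightarrow> (\<forall>x y. R x y \<or> R y x) \<and> (\<forall>x y z. R x y \<longrightarrow> R y z \<longrightarrow> R x z)"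

definition continuous_pref :: "pref \<Rightarrow> bool" where
  "continuous_pref R \<longleftrightarrow> (\<forall>x. closed {y. R y x} \<and> closed {y. R x y})"

definition U :: "pref set" where
  "U = {R. complete_preorder R \<and> continuous_pref R}"

definition peak :: "pref \<Rightarrow> ennreal set" where
  "peak R = {x. \<forall>y. R x y}"

definition peak_lo :: "pref \<Rightarrow> ennreal" where
  "peak_lo R = Inf (peak R)"

definition peak_hi :: "pref \<Rightarrow> ennreal" where
  "peak_hi R = Sup (peak R)"

definition SP :: "pref set" where
  "SP = {R \<in> U. \<exists>a. peak R = {a} \<and>
      (\<forall>x x'. x < \<infinity> \<longrightarrow> x' < \<infinity> \<longrightarrow> ((x' < x \<and> x \<le> a) \<or> (a \<le> x \<and> x < x')) \<longrightarrow> strict R x x')}"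

definition SPL :: "pref set" where
  "SPL = {R \<in> U. peak R = {peak_lo R .. peak_hi R} \<and>
      (\<forall>x x'. x < \<infinity> \<longrightarrow> x' < \<infinity> \<longrightarrow>
         ((x' < x \<and> x \<le> peak_lo R) \<or> (peak_hi R \<le> x \<and> x < x')) \<longrightarrow> strict R x x')}"

definition agents :: "nat \<Rightarrow> nat set" where
  "agents n = {1..n}"

definition profiles :: "pref set \<Rightarrow> nat \<Rightarrow> (nat \<Rightarrow> pref) set" where
  "profiles D n = PiE (agents n) (\<lambda>_. D)"

type_synonym rule = "(nat \<Rightarrow> pref) \<Rightarrow> real \<Rightarrow> nat \<Rightarrow> real"

definition is_rule :: "pref set \<Rightarrow> nat \<Rightarrow> rule \<Rightarrow> bool" where
  "is_rule D n \<phi> \<longleftrightarrow> (\<forall>R\<in>profiles D n. \<forall>\<Omega>>0.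
      (\<forall>i\<in>agents n. 0 \<le> \<phi> R \<Omega> i) \<and> (\<Sum>i\<in>agents n. \<phi> R \<Omega> i) = \<Omega>)"

definition efficient :: "pref set \<Rightarrow> nat \<Rightarrow> rule \<Rightarrow> bool" where
  "efficient D n \<phi> \<longleftrightarrow> (\<forall>R\<in>profiles D n. \<forall>\<Omega>>0.
      \<not> (\<exists>x::nat \<Rightarrow> real. (\<forall>i\<in>agents n. 0 \<le> x i) \<and> (\<Sum>i\<in>agents n. x i) = \<Omega> \<and>
            (\<forall>i\<in>agents n. R i (ennreal (x i)) (ennreal (\<phi> R \<Omega> i))) \<and>
            (\<exists>i\<in>agents n. strict (R i) (ennreal (x i)) (ennreal (\<phi> R \<Omega> i)))))"

definition own_peak_only :: "pref set \<Rightarrow> nat \<Rightarrow> rule \<Rightarrow> bool" where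
  "own_peak_only D n \<phi> \<longleftrightarrow> (\<forall>R\<in>profiles D n. \<forall>\<Omega>>0. \<forall>i\<in>agents n. \<forall>R'\<in>D.
      peak R' = peak (R i) \<longrightarrow> \<phi> R \<Omega> i = \<phi> (R(i := R')) \<Omega> i)"

definition equal_division_guarantee :: "pref set \<Rightarrow> nat \<Rightarrow> rule \<Rightarrow> bool" where
  "equal_division_guarantee D n \<phi> \<longleftrightarrow> (\<forall>R\<in>profiles D n. \<forall>\<Omega>>0. \<forall>i\<in>agents n.
      ennreal (\<Omega> / real n) \<in> peak (R i) \<longrightarrow>
      indiff (R i) (ennreal (\<phi> R \<Omega> i)) (ennreal (\<Omega> / real n)))"

definition option_set :: "pref set \<Rightarrow> nat \<Rightarrow> rule \<Rightarrow> nat \<Rightarrow> pref \<Rightarrow> real \<Rightarrow> real set" where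
  "option_set D n \<phi> i Ri \<Omega> = {\<phi> R \<Omega> i | R. R \<in> profiles D n \<and> R i = Ri}"

definition manipulation :: "pref set \<Rightarrow> nat \<Rightarrow> rule \<Rightarrow> nat \<Rightarrow> pref \<Rightarrow> real \<Rightarrow> pref \<Rightarrow> bool" where
  "manipulation D n \<phi> i Ri \<Omega> Ri' \<longleftrightarrow> Ri' \<in> D \<and>
     (\<exists>R\<in>profiles D n. R i = Ri \<and>
        strict Ri (ennreal (\<phi> (R(i := Ri')) \<Omega> i)) (ennreal (\<phi> R \<Omega> i)))"

definition obvious_manipulation :: "pref set \<Rightarrow> nat \<Rightarrow> rule \<Rightarrow> nat \<Rightarrow> pref \<Rightarrow> real \<Rightarrow> pref \<Rightarrow> bool" where
  "obvious_manipulation D n \<phi> i Ri \<Omega> Ri' \<longleftrightarrow> manipulation D n \<phi> i Ri \<Omega> Ri' \<and>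
     (\<forall>x'\<in>option_set D n \<phi> i Ri' \<Omega>. \<exists>x\<in>option_set D n \<phi> i Ri \<Omega>.
        strict Ri (ennreal x') (ennreal x))"

definition NOM :: "pref set \<Rightarrow> nat \<Rightarrow> rule \<Rightarrow> bool" where
  "NOM D n \<phi> \<longleftrightarrow> (\<forall>i\<in>agents n. \<forall>Ri\<in>D. \<forall>\<Omega>>0. \<forall>Ri'.
      \<not> obvious_manipulation D n \<phi> i Ri \<Omega> Ri')"

definition good_rule :: "pref set \<Rightarrow> nat \<Rightarrow> rule \<Rightarrow> bool" where
  "good_rule D n \<phi> \<longleftrightarrow> is_rule D n \<phi> \<and> own_peak_only D n \<phi> \<and> efficient D n \<phi> \<and>
     equal_division_guarantee D n \<phi> \<and> NOM D n \<phi>"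

end

theory Submission
  imports Defs
begin

definition sig :: "ennreal \<Rightarrow> real" where
  "sig t = enn2real (1 - inverse (1 + t))"

lemma sig_ennreal: "0 \<le> t \<Longrightarrow> sig (ennreal t) = t / (1 + t)"
proof -
  assume t: "0 \<le> t"
  have "inverse (1 + ennreal t) = inverse (ennreal (1 + t))" using t by simp
  also have "\<dots> = ennreal (inverse (1 + t))" by (rule inverse_ennreal) (use t in simp)
  finally have "inverse (1 + ennreal t) = ennreal (1 / (1 + t))"
    by (simp add: divide_inverse)
  then have "1 - inverse (1 + ennreal t) = ennreal (1 - 1/(1+t))"
    using t by (simp add: ennreal_minus[symmetric])
  moreover have "1 - 1/(1+t) = t/(1+t)" using t by (simp add: field_simps)
  moreover have "0 \<le> t/(1+t)" using t by simp
  ultimately show ?thesis unfolding sig_def by simp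
qed

lemma sig_top: "sig top = 1"
  unfolding sig_def by simp

lemma sig_cont: "continuous_on UNIV sig"
proof -
  have c1: "continuous_on UNIV (\<lambda>t::ennreal. 1 - inverse (1 + t))"
    apply (rule continuous_on_diff_ennreal)
    apply (auto intro!: continuous_on_inverse_ennreal continuous_on_add continuous_on_const continuous_on_id)
    done
  have fin: "1 - inverse (1 + t) < (top::ennreal)" for t :: ennreal
    by (metis diff_le_self_ennreal ennreal_1 ennreal_less_top order_le_less_trans)
  show ?thesis unfolding continuous_on_def sig_def
  proof
    fix x :: ennreal
    have "((\<lambda>t. 1 - inverse (1 + t)) \<longlongrightarrow> (1 - inverse (1 + x))) (at x within UNIV)"
      using c1 unfolding continuous_on_def by auto
    then have "((\<lambda>t. 1 - inverse (1 + t)) \<longlongrightarrow> ennreal (enn2real (1 - inverse (1 + x)))) (at x within UNIV)"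
      using fin[of x] by simp
    then show "((\<lambda>t. enn2real (1 - inverse (1 + t))) \<longlongrightarrow> enn2real (1 - inverse (1 + x))) (at x within UNIV)"
      by (rule tendsto_enn2real) simp
  qed
qed

lemma sig_less_top: "x < top \<Longrightarrow> sig x < 1"
proof -
  assume "x < top"
  then obtain t where t: "0 \<le> t" "x = ennreal t" by (cases x rule: ennreal_cases) auto
  then show ?thesis by (simp add: sig_ennreal)
qed

lemma sig_strict: "x < y \<Longrightarrow> sig x < sig y"
proof -
  assume xy: "x < y"
  then have "x < top" using top.not_eq_extremum by fastforce
  then obtain t where t: "0 \<le> t" "x = ennreal t" by (cases x rule: ennreal_cases) auto
  show ?thesis
  proof (cases "y = top")
    case True then show ?thesis using sig_less_top[OF \<open>x < top\<close>] sig_top by simp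
  next
    case False
    then obtain s where s: "0 \<le> s" "y = ennreal s" by (cases y rule: ennreal_cases) auto
    have "t < s" using xy t s by (simp add: ennreal_less_iff)
    then have "t/(1+t) < s/(1+s)" using t s by (simp add: field_simps)
    then show ?thesis using t s by (simp add: sig_ennreal)
  qed
qed

lemma sig_mono: "x \<le> y \<Longrightarrow> sig x \<le> sig y"
  by (metis order_le_less sig_strict less_imp_le order_refl)

lemma sig_le_iff: "sig x \<le> sig y \<longleftrightarrow> x \<le> y"
  by (metis linorder_not_le sig_strict sig_mono)

lemma sig_less_iff: "sig x < sig y \<longleftrightarrow> x < y"
  by (metis linorder_not_le sig_strict sig_mono)

definition upref :: "(ennreal \<Rightarrow> real) \<Rightarrow> pref" where
  "upref u = (\<lambda>x y. u y \<le> u x)"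

lemma upref_U: "continuous_on UNIV u \<Longrightarrow> upref u \<in> U"
  unfolding U_def complete_preorder_def continuous_pref_def upref_def
  by (auto intro!: closed_Collect_le continuous_on_const)

lemma upref_strict: "strict (upref u) x y \<longleftrightarrow> u y < u x"
  unfolding strict_def upref_def by auto

definition fam :: "real \<Rightarrow> real \<Rightarrow> real \<Rightarrow> ennreal \<Rightarrow> real" where
  "fam A B k t = - (max (A - sig t) 0 + k * max (sig t - B) 0)"

definition pfam :: "ennreal \<Rightarrow> ennreal \<Rightarrow> real \<Rightarrow> pref" where
  "pfam lo hi k = upref (fam (sig lo) (sig hi) k)"

lemma fam_cont: "continuous_on UNIV (fam A B k)"
  unfolding fam_def
  by (intro continuous_intros continuous_on_compose2[OF sig_cont]) auto

lemma pfam_U: "pfam lo hi k \<in> U"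
  unfolding pfam_def by (rule upref_U[OF fam_cont])

lemma fam_le0: "k \<ge> 0 \<Longrightarrow> fam A B k t \<le> 0"
proof -
  assume "k \<ge> 0"
  then have "0 \<le> k * max (sig t - B) 0" by simp
  moreover have "0 \<le> max (A - sig t) 0" by simp
  ultimately show ?thesis unfolding fam_def by linarith
qed

lemma peak_pfam:
  assumes "lo \<le> hi" "k > 0"
  shows "peak (pfam lo hi k) = {lo..hi}"
proof -
  have z: "fam (sig lo) (sig hi) k lo = 0"
    using assms sig_le_iff[of lo hi] unfolding fam_def by simp
  have "t \<in> peak (pfam lo hi k) \<longleftrightarrow> fam (sig lo) (sig hi) k t = 0" for t
  proof
    assume "t \<in> peak (pfam lo hi k)"
    then have "fam (sig lo) (sig hi) k lo \<le> fam (sig lo) (sig hi) k t"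
      unfolding peak_def pfam_def upref_def by auto
    then show "fam (sig lo) (sig hi) k t = 0" using z fam_le0[of k] assms by (simp add: order_antisym)
  next
    assume "fam (sig lo) (sig hi) k t = 0"
    then show "t \<in> peak (pfam lo hi k)"
      unfolding peak_def pfam_def upref_def using fam_le0[of k] assms by auto
  qed
  moreover have "fam (sig lo) (sig hi) k t = 0 \<longleftrightarrow> lo \<le> t \<and> t \<le> hi" for t
  proof -
    have "fam (sig lo) (sig hi) k t = 0 \<longleftrightarrow> max (sig lo - sig t) 0 = 0 \<and> max (sig t - sig hi) 0 = 0"
    proof -
      have a: "0 \<le> max (sig lo - sig t) 0" by simp
      have b: "0 \<le> max (sig t - sig hi) 0" by simp
      have c: "k * max (sig t - sig hi) 0 = 0 \<longleftrightarrow> max (sig t - sig hi) 0 = 0" using assms by simp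
      have d: "0 \<le> k * max (sig t - sig hi) 0" using assms b by simp
      show ?thesis unfolding fam_def using a b c d by linarith
    qed
    also have "\<dots> \<longleftrightarrow> sig lo \<le> sig t \<and> sig t \<le> sig hi" by auto
    finally show ?thesis by (simp add: sig_le_iff)
  qed
  ultimately show ?thesis by (auto simp: atLeastAtMost_iff)
qed

lemma pfam_lo_hi:
  assumes "lo \<le> hi" "k > 0"
  shows "peak_lo (pfam lo hi k) = lo" "peak_hi (pfam lo hi k) = hi"
  unfolding peak_lo_def peak_hi_def peak_pfam[OF assms] using assms by auto

lemma pfam_SPL:
  assumes "lo \<le> hi" "k > 0"
  shows "pfam lo hi k \<in> SPL"
proof -
  have slh: "sig lo \<le> sig hi" using assms(1) sig_le_iff by blast
  have st: "strict (pfam lo hi k) x x'" if "(x' < x \<and> x \<le> lo) \<or> (hi \<le> x \<and> x < x')" for x x'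
    using that
  proof
    assume a: "x' < x \<and> x \<le> lo"
    then have "sig x' < sig x" "sig x \<le> sig lo" using sig_less_iff sig_le_iff by auto
    then have "max (sig x - sig hi) 0 = 0" "max (sig x' - sig hi) 0 = 0"
      "max (sig lo - sig x) 0 = sig lo - sig x" "max (sig lo - sig x') 0 = sig lo - sig x'"
      using slh by auto
    then show ?thesis unfolding pfam_def upref_strict fam_def using \<open>sig x' < sig x\<close> by simp
  next
    assume a: "hi \<le> x \<and> x < x'"
    then have "sig x < sig x'" "sig hi \<le> sig x" using sig_less_iff sig_le_iff by auto
    then have m: "max (sig lo - sig x) 0 = 0" "max (sig lo - sig x') 0 = 0"
      "max (sig x - sig hi) 0 = sig x - sig hi" "max (sig x' - sig hi) 0 = sig x' - sig hi"
      using slh by auto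
    have "k * (sig x - sig hi) < k * (sig x' - sig hi)"
      using \<open>sig x < sig x'\<close> assms(2) by simp
    then show ?thesis unfolding pfam_def upref_strict fam_def m by simp
  qed
  show ?thesis unfolding SPL_def mem_Collect_eq pfam_lo_hi[OF assms]
  proof (intro conjI allI impI)
    show "pfam lo hi k \<in> U" by (rule pfam_U)
    show "peak (pfam lo hi k) = {lo..hi}" by (rule peak_pfam[OF assms])
  next
    fix x x' :: ennreal
    assume "x' < x \<and> x \<le> lo \<or> hi \<le> x \<and> x < x'"
    then show "strict (pfam lo hi k) x x'" by (rule st)
  qed
qed

lemma pfam_SP:
  assumes "k > 0"
  shows "pfam q q k \<in> SP"
proof -
  have sp: "pfam q q k \<in> SPL" using pfam_SPL[of q q k] assms by simp
  have pk: "peak (pfam q q k) = {q}" using peak_pfam[of q q k] assms by simp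
  have lh: "peak_lo (pfam q q k) = q" "peak_hi (pfam q q k) = q" using pfam_lo_hi[of q q k] assms by auto
  from sp have "\<forall>x x'. x < \<infinity> \<longrightarrow> x' < \<infinity> \<longrightarrow> ((x' < x \<and> x \<le> peak_lo (pfam q q k)) \<or> (peak_hi (pfam q q k) \<le> x \<and> x < x')) \<longrightarrow> strict (pfam q q k) x x'"
    unfolding SPL_def by blast
  then have st: "\<forall>x x'. x < \<infinity> \<longrightarrow> x' < \<infinity> \<longrightarrow> ((x' < x \<and> x \<le> q) \<or> (q \<le> x \<and> x < x')) \<longrightarrow> strict (pfam q q k) x x'"
    unfolding lh .
  show ?thesis unfolding SP_def
    apply (rule CollectI, rule conjI, rule pfam_U)
    apply (rule exI[of _ q], rule conjI, rule pk)
    by (rule st)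
qed

lemma U_refl: "R \<in> U \<Longrightarrow> R x x"
  unfolding U_def complete_preorder_def by blast

lemma U_total: "R \<in> U \<Longrightarrow> R x y \<or> R y x"
  unfolding U_def complete_preorder_def by blast

lemma U_trans: "R \<in> U \<Longrightarrow> R x y \<Longrightarrow> R y z \<Longrightarrow> R x z"
  unfolding U_def complete_preorder_def by blast

lemma U_closed1: "R \<in> U \<Longrightarrow> closed {y. R y x}"
  unfolding U_def continuous_pref_def by blast

lemma U_closed2: "R \<in> U \<Longrightarrow> closed {y. R x y}"
  unfolding U_def continuous_pref_def by blast

lemma U_not_strict: "R \<in> U \<Longrightarrow> \<not> strict R x y \<Longrightarrow> R y x"
  unfolding strict_def using U_total by blast

lemma U_not_R: "R \<in> U \<Longrightarrow> \<not> R x y \<Longrightarrow> strict R y x"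
  unfolding strict_def using U_total by blast

lemma peak_closed: "R \<in> U \<Longrightarrow> closed (peak R)"
proof -
  assume R: "R \<in> U"
  have "peak R = (\<Inter>x. {y. R y x})" unfolding peak_def by auto
  then show ?thesis using U_closed1[OF R] by auto
qed

lemma finite_max_pref:
  assumes R: "R \<in> U" and F: "finite F" "F \<noteq> {}"
  shows "\<exists>m. \<forall>x\<in>F. R m x"
  using F
proof (induction F rule: finite_ne_induct)
  case (singleton x) then show ?case using U_refl[OF R] by auto
next
  case (insert x F)
  then obtain m where m: "\<forall>y\<in>F. R m y" by blast
  show ?case
  proof (cases "R m x")
    case True then show ?thesis using m by auto
  next
    case False
    then have "R x m" using U_total[OF R] by blast
    then show ?thesis using m U_trans[OF R] U_refl[OF R] by blast
  qed
qed

lemma peak_nonempty: "R \<in> U \<Longrightarrow> peak R \<noteq> {}"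
proof -
  assume R: "R \<in> U"
  have "UNIV \<inter> (\<Inter>x\<in>UNIV. {y. R y x}) \<noteq> {}"
  proof (rule compact_imp_fip_image)
    show "compact (UNIV :: ennreal set)" by (rule compact_UNIV)
    show "closed {y. R y x}" for x using U_closed1[OF R] .
    fix I' :: "ennreal set" assume "finite I'"
    show "UNIV \<inter> (\<Inter>x\<in>I'. {y. R y x}) \<noteq> {}"
    proof (cases "I' = {}")
      case True then show ?thesis by simp
    next
      case False
      then obtain m where "\<forall>x\<in>I'. R m x" using finite_max_pref[OF R \<open>finite I'\<close>] by blast
      then show ?thesis by blast
    qed
  qed
  then show ?thesis unfolding peak_def by auto
qed

lemma peak_lo_in: "R \<in> U \<Longrightarrow> peak_lo R \<in> peak R"
  unfolding peak_lo_def by (rule closed_contains_Inf_cl[OF peak_closed peak_nonempty])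

lemma peak_hi_in: "R \<in> U \<Longrightarrow> peak_hi R \<in> peak R"
  unfolding peak_hi_def by (rule closed_contains_Sup_cl[OF peak_closed peak_nonempty])

lemma peak_lo_le: "x \<in> peak R \<Longrightarrow> peak_lo R \<le> x"
  unfolding peak_lo_def by (rule Inf_lower)

lemma peak_hi_ge: "x \<in> peak R \<Longrightarrow> x \<le> peak_hi R"
  unfolding peak_hi_def by (rule Sup_upper)

lemma peak_best: "x \<in> peak R \<Longrightarrow> R x y"
  unfolding peak_def by blast

lemma peak_lo_hi: "R \<in> U \<Longrightarrow> peak_lo R \<le> peak_hi R"
  by (rule peak_hi_ge[OF peak_lo_in])

lemma in_peak_trans: "R \<in> U \<Longrightarrow> x \<in> peak R \<Longrightarrow> R y x \<Longrightarrow> y \<in> peak R"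
  unfolding peak_def using U_trans by blast

lemma SPL_U: "R \<in> SPL \<Longrightarrow> R \<in> U" unfolding SPL_def by blast

lemma SPL_peak: "R \<in> SPL \<Longrightarrow> peak R = {peak_lo R..peak_hi R}" unfolding SPL_def by blast

lemma SPL_strict:
  assumes "R \<in> SPL" "x < \<infinity>" "x' < \<infinity>" "(x' < x \<and> x \<le> peak_lo R) \<or> (peak_hi R \<le> x \<and> x < x')"
  shows "strict R x x'"
proof -
  have "\<forall>x x'. x < \<infinity> \<longrightarrow> x' < \<infinity> \<longrightarrow> ((x' < x \<and> x \<le> peak_lo R) \<or> (peak_hi R \<le> x \<and> x < x')) \<longrightarrow> strict R x x'"
    using assms(1) unfolding SPL_def by blast
  then show ?thesis using assms(2-4) by blast
qed

lemma ennreal_lt_inf: "ennreal a < \<infinity>"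
  by simp

lemma SPL_strict_left:
  assumes "R \<in> SPL" "0 \<le> a" "a < b" "ennreal b \<le> peak_lo R"
  shows "strict R (ennreal b) (ennreal a)"
proof -
  have "ennreal a < ennreal b" using assms by (simp add: ennreal_less_iff)
  then show ?thesis using assms SPL_strict[OF assms(1) ennreal_lt_inf ennreal_lt_inf] by blast
qed

lemma SPL_strict_right:
  assumes "R \<in> SPL" "0 \<le> a" "a < b" "peak_hi R \<le> ennreal a"
  shows "strict R (ennreal a) (ennreal b)"
proof -
  have "ennreal a < ennreal b" using assms by (simp add: ennreal_less_iff)
  then show ?thesis using assms SPL_strict[OF assms(1) ennreal_lt_inf ennreal_lt_inf] by blast
qed

lemma SPL_weak_left:
  assumes "R \<in> SPL" "0 \<le> a" "a \<le> b" "ennreal b \<le> peak_lo R"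
  shows "R (ennreal b) (ennreal a)"
proof (cases "a = b")
  case True then show ?thesis using U_refl SPL_U assms by auto
next
  case False then show ?thesis using SPL_strict_left[of R a b] assms unfolding strict_def by auto
qed

lemma SPL_weak_right:
  assumes "R \<in> SPL" "0 \<le> a" "a \<le> b" "peak_hi R \<le> ennreal a"
  shows "R (ennreal a) (ennreal b)"
proof (cases "a = b")
  case True then show ?thesis using U_refl SPL_U assms by auto
next
  case False then show ?thesis using SPL_strict_right[of R a b] assms unfolding strict_def by auto
qed

lemma SPL_in_peak: "R \<in> SPL \<Longrightarrow> peak_lo R \<le> x \<Longrightarrow> x \<le> peak_hi R \<Longrightarrow> x \<in> peak R"
  using SPL_peak by auto

lemma SP_sub_SPL: "SP \<subseteq> SPL"
proof
  fix R assume "R \<in> SP"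
  then obtain a where R: "R \<in> U" "peak R = {a}"
    and st: "\<forall>x x'. x < \<infinity> \<longrightarrow> x' < \<infinity> \<longrightarrow> ((x' < x \<and> x \<le> a) \<or> (a \<le> x \<and> x < x')) \<longrightarrow> strict R x x'"
    unfolding SP_def by blast
  have "peak_lo R = a" "peak_hi R = a" unfolding peak_lo_def peak_hi_def R by auto
  then show "R \<in> SPL" unfolding SPL_def mem_Collect_eq using R st by simp
qed

definition allocD :: "nat set \<Rightarrow> (nat \<Rightarrow> real) \<Rightarrow> real \<Rightarrow> real \<Rightarrow> nat \<Rightarrow> real" where
  "allocD N L c \<Omega> i = (let B = {j\<in>N. c < L j};
      \<theta> = (\<Omega> - sum L (N - B) - real (card B) * c) / (\<Sum>j\<in>B. L j - c)
    in if L i \<le> c then L i else c + \<theta> * (L i - c))"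

lemma allocD_props:
  assumes N: "finite N" and Om: "\<Omega> = real (card N) * c" and Lpos: "\<And>j. j \<in> N \<Longrightarrow> 0 \<le> L j"
    and sumL: "\<Omega> \<le> sum L N" and c: "0 \<le> c"
  shows "sum (allocD N L c \<Omega>) N = \<Omega>"
    and "\<And>i. i \<in> N \<Longrightarrow> L i \<le> c \<Longrightarrow> allocD N L c \<Omega> i = L i"
    and "\<And>i. i \<in> N \<Longrightarrow> c < L i \<Longrightarrow> c \<le> allocD N L c \<Omega> i \<and> allocD N L c \<Omega> i \<le> L i"
proof -
  define B where "B = {j\<in>N. c < L j}"
  define A where "A = N - B"
  define Den where "Den = (\<Sum>j\<in>B. L j - c)"
  define Num where "Num = \<Omega> - sum L A - real (card B) * c"
  define \<theta> where "\<theta> = Num / Den"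
  have phi: "allocD N L c \<Omega> i = (if L i \<le> c then L i else c + \<theta> * (L i - c))" for i
    unfolding allocD_def B_def[symmetric] A_def[symmetric] Den_def[symmetric] Num_def[symmetric] \<theta>_def Let_def ..
  have finB: "finite B" "finite A" using N unfolding B_def A_def by auto
  have AB: "A \<inter> B = {}" "A \<union> B = N" "B \<subseteq> N" unfolding A_def B_def by auto
  have cardN: "card N = card A + card B" using AB finB by (metis card_Un_disjoint)
  have sumN: "sum f N = sum f A + sum f B" for f :: "nat \<Rightarrow> real"
    using AB finB by (metis sum.union_disjoint)
  have sumA_le: "sum L A \<le> real (card A) * c"
  proof -
    have "sum L A \<le> sum (\<lambda>_. c) A" by (rule sum_mono) (auto simp: A_def B_def)
    then show ?thesis by simp
  qed
  have Den_nn: "0 \<le> Den" unfolding Den_def by (rule sum_nonneg) (auto simp: B_def)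
  have Num_nn: "0 \<le> Num" unfolding Num_def using Om cardN sumA_le by (simp add: algebra_simps)
  have Num_le: "Num \<le> Den"
  proof -
    have "Den = sum L B - real (card B) * c" unfolding Den_def by (simp add: sum_subtractf)
    then show ?thesis unfolding Num_def using sumL sumN[of L] by simp
  qed
  have th: "0 \<le> \<theta>" "\<theta> \<le> 1" unfolding \<theta>_def using Num_nn Den_nn Num_le
    by (auto simp: divide_le_eq_1)
  show "sum (allocD N L c \<Omega>) N = \<Omega>"
  proof (cases "B = {}")
    case True
    then have "A = N" using AB by auto
    have "allocD N L c \<Omega> i = L i" if "i \<in> N" for i using that True unfolding phi B_def by auto
    then have "sum (allocD N L c \<Omega>) N = sum L N" by (rule sum.cong[OF refl])
    moreover have "sum L N \<le> \<Omega>" using sumA_le \<open>A = N\<close> Om by simp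
    ultimately show ?thesis using sumL by simp
  next
    case False
    then have "Den > 0" unfolding Den_def using finB
      by (intro sum_pos) (auto simp: B_def)
    have sA: "sum (allocD N L c \<Omega>) A = sum L A"
      by (rule sum.cong) (auto simp: phi A_def B_def)
    have "sum (allocD N L c \<Omega>) B = (\<Sum>j\<in>B. c + \<theta> * (L j - c))"
      by (rule sum.cong) (auto simp: phi B_def)
    also have "\<dots> = real (card B) * c + \<theta> * Den"
      unfolding Den_def by (simp add: sum.distrib sum_distrib_left)
    also have "\<theta> * Den = Num" unfolding \<theta>_def using \<open>Den > 0\<close> by simp
    finally show ?thesis using sA sumN[of "allocD N L c \<Omega>"] unfolding Num_def by simp
  qed
  show "\<And>i. i \<in> N \<Longrightarrow> L i \<le> c \<Longrightarrow> allocD N L c \<Omega> i = L i" unfolding phi by simp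
  show "\<And>i. i \<in> N \<Longrightarrow> c < L i \<Longrightarrow> c \<le> allocD N L c \<Omega> i \<and> allocD N L c \<Omega> i \<le> L i"
  proof -
    fix i assume "i \<in> N" "c < L i"
    then have e: "allocD N L c \<Omega> i = c + \<theta> * (L i - c)" unfolding phi by simp
    have "0 \<le> \<theta> * (L i - c)" using th \<open>c < L i\<close> by simp
    moreover have "\<theta> * (L i - c) \<le> 1 * (L i - c)" using th \<open>c < L i\<close> by (intro mult_right_mono) auto
    ultimately show "c \<le> allocD N L c \<Omega> i \<and> allocD N L c \<Omega> i \<le> L i" unfolding e by simp
  qed
qed

definition allocE :: "nat set \<Rightarrow> (nat \<Rightarrow> real) \<Rightarrow> real \<Rightarrow> real \<Rightarrow> nat \<Rightarrow> real" where
  "allocE N H c \<Omega> i = (let B = {j\<in>N. H j < c};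
      \<theta> = (sum H (N - B) + real (card B) * c - \<Omega>) / (\<Sum>j\<in>B. c - H j)
    in if c \<le> H i then H i else c - \<theta> * (c - H i))"

lemma allocE_props:
  assumes N: "finite N" and Om: "\<Omega> = real (card N) * c"
    and sumH: "sum H N \<le> \<Omega>"
  shows "sum (allocE N H c \<Omega>) N = \<Omega>"
    and "\<And>i. i \<in> N \<Longrightarrow> c \<le> H i \<Longrightarrow> allocE N H c \<Omega> i = H i"
    and "\<And>i. i \<in> N \<Longrightarrow> H i < c \<Longrightarrow> H i \<le> allocE N H c \<Omega> i \<and> allocE N H c \<Omega> i \<le> c"
proof -
  define B where "B = {j\<in>N. H j < c}"
  define A where "A = N - B"
  define Den where "Den = (\<Sum>j\<in>B. c - H j)"
  define Num where "Num = sum H A + real (card B) * c - \<Omega>"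
  define \<theta> where "\<theta> = Num / Den"
  have phi: "allocE N H c \<Omega> i = (if c \<le> H i then H i else c - \<theta> * (c - H i))" for i
    unfolding allocE_def B_def[symmetric] A_def[symmetric] Den_def[symmetric] Num_def[symmetric] \<theta>_def Let_def ..
  have finB: "finite B" "finite A" using N unfolding B_def A_def by auto
  have AB: "A \<inter> B = {}" "A \<union> B = N" "B \<subseteq> N" unfolding A_def B_def by auto
  have cardN: "card N = card A + card B" using AB finB by (metis card_Un_disjoint)
  have sumN: "sum f N = sum f A + sum f B" for f :: "nat \<Rightarrow> real"
    using AB finB by (metis sum.union_disjoint)
  have sumA_ge: "real (card A) * c \<le> sum H A"
  proof -
    have "sum (\<lambda>_. c) A \<le> sum H A" by (rule sum_mono) (auto simp: A_def B_def)
    then show ?thesis by simp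
  qed
  have Den_nn: "0 \<le> Den" unfolding Den_def by (rule sum_nonneg) (auto simp: B_def)
  have Num_nn: "0 \<le> Num" unfolding Num_def using Om cardN sumA_ge by (simp add: algebra_simps)
  have Num_le: "Num \<le> Den"
  proof -
    have "Den = real (card B) * c - sum H B" unfolding Den_def by (simp add: sum_subtractf)
    then show ?thesis unfolding Num_def using sumH sumN[of H] by simp
  qed
  have th: "0 \<le> \<theta>" "\<theta> \<le> 1" unfolding \<theta>_def using Num_nn Den_nn Num_le
    by (auto simp: divide_le_eq_1)
  show "sum (allocE N H c \<Omega>) N = \<Omega>"
  proof (cases "B = {}")
    case True
    then have "A = N" using AB by auto
    have "allocE N H c \<Omega> i = H i" if "i \<in> N" for i using that True unfolding phi B_def by auto
    then have "sum (allocE N H c \<Omega>) N = sum H N" by (rule sum.cong[OF refl])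
    moreover have "\<Omega> \<le> sum H N" using sumA_ge \<open>A = N\<close> Om by simp
    ultimately show ?thesis using sumH by simp
  next
    case False
    then have "Den > 0" unfolding Den_def using finB
      by (intro sum_pos) (auto simp: B_def)
    have sA: "sum (allocE N H c \<Omega>) A = sum H A"
      by (rule sum.cong) (auto simp: phi A_def B_def)
    have "sum (allocE N H c \<Omega>) B = (\<Sum>j\<in>B. c - \<theta> * (c - H j))"
      by (rule sum.cong) (auto simp: phi B_def)
    also have "\<dots> = (\<Sum>j\<in>B. c) - (\<Sum>j\<in>B. \<theta> * (c - H j))" by (simp add: sum_subtractf)
    also have "\<dots> = real (card B) * c - \<theta> * Den"
      unfolding Den_def by (simp add: sum_distrib_left)
    also have "\<theta> * Den = Num" unfolding \<theta>_def using \<open>Den > 0\<close> by simp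
    finally show ?thesis using sA sumN[of "allocE N H c \<Omega>"] unfolding Num_def by simp
  qed
  show "\<And>i. i \<in> N \<Longrightarrow> c \<le> H i \<Longrightarrow> allocE N H c \<Omega> i = H i" unfolding phi by simp
  show "\<And>i. i \<in> N \<Longrightarrow> H i < c \<Longrightarrow> H i \<le> allocE N H c \<Omega> i \<and> allocE N H c \<Omega> i \<le> c"
  proof -
    fix i assume "i \<in> N" "H i < c"
    then have e: "allocE N H c \<Omega> i = c - \<theta> * (c - H i)" unfolding phi by simp
    have "0 \<le> \<theta> * (c - H i)" using th \<open>H i < c\<close> by simp
    moreover have "\<theta> * (c - H i) \<le> 1 * (c - H i)" using th \<open>H i < c\<close> by (intro mult_right_mono) auto
    ultimately show "H i \<le> allocE N H c \<Omega> i \<and> allocE N H c \<Omega> i \<le> c" unfolding e by simp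
  qed
qed

definition allocM :: "nat set \<Rightarrow> (nat \<Rightarrow> real) \<Rightarrow> (nat \<Rightarrow> real) \<Rightarrow> real \<Rightarrow> nat \<Rightarrow> real" where
  "allocM N L H \<Omega> i = L i + ((\<Omega> - sum L N) / (\<Sum>j\<in>N. H j - L j)) * (H i - L i)"

lemma allocM_props:
  assumes N: "finite N" and LH: "\<And>j. j \<in> N \<Longrightarrow> L j \<le> H j"
    and s1: "sum L N \<le> \<Omega>" and s2: "\<Omega> \<le> sum H N"
  shows "sum (allocM N L H \<Omega>) N = \<Omega>"
    and "\<And>i. i \<in> N \<Longrightarrow> L i \<le> allocM N L H \<Omega> i \<and> allocM N L H \<Omega> i \<le> H i"
proof -
  define Den where "Den = (\<Sum>j\<in>N. H j - L j)"
  define \<theta> where "\<theta> = (\<Omega> - sum L N) / Den"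
  have phi: "allocM N L H \<Omega> i = L i + \<theta> * (H i - L i)" for i
    unfolding allocM_def Den_def[symmetric] \<theta>_def ..
  have Den_eq: "Den = sum H N - sum L N" unfolding Den_def by (simp add: sum_subtractf)
  have th0: "0 \<le> \<theta>" unfolding \<theta>_def using s1 s2 Den_eq by (intro divide_nonneg_nonneg) auto
  have th1: "\<theta> \<le> 1"
  proof (cases "Den = 0")
    case True then show ?thesis unfolding \<theta>_def by simp
  next
    case False then have "Den > 0" using Den_eq s1 s2 by linarith
    moreover have "\<Omega> - sum L N \<le> Den" using Den_eq s2 by linarith
    ultimately show ?thesis unfolding \<theta>_def by (simp add: divide_le_eq_1)
  qed
  note th = th0 th1
  show "sum (allocM N L H \<Omega>) N = \<Omega>"
  proof (cases "Den = 0")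
    case True
    then have "sum L N = \<Omega>" using Den_eq s1 s2 by simp
    have "Den = 0" by fact
    moreover have "\<forall>j\<in>N. 0 \<le> H j - L j" using LH by simp
    ultimately have "\<forall>j\<in>N. H j - L j = 0" unfolding Den_def using sum_nonneg_eq_0_iff[OF N, of "\<lambda>j. H j - L j"] by simp
    then have "allocM N L H \<Omega> i = L i" if "i \<in> N" for i using that unfolding phi by simp
    then have "sum (allocM N L H \<Omega>) N = sum L N" by (rule sum.cong[OF refl])
    then show ?thesis using \<open>sum L N = \<Omega>\<close> by simp
  next
    case False
    have "sum (allocM N L H \<Omega>) N = (\<Sum>i\<in>N. L i + \<theta> * (H i - L i))"
      by (rule sum.cong) (simp_all add: phi)
    also have "\<dots> = sum L N + \<theta> * Den"
      unfolding Den_def by (simp add: sum.distrib sum_distrib_left)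
    also have "\<theta> * Den = \<Omega> - sum L N" unfolding \<theta>_def using False by simp
    finally show ?thesis by simp
  qed
  show "\<And>i. i \<in> N \<Longrightarrow> L i \<le> allocM N L H \<Omega> i \<and> allocM N L H \<Omega> i \<le> H i"
  proof -
    fix i assume i: "i \<in> N"
    have "0 \<le> \<theta> * (H i - L i)" using th LH[OF i] by simp
    moreover have "\<theta> * (H i - L i) \<le> 1 * (H i - L i)" using th LH[OF i] by (intro mult_right_mono) auto
    ultimately show "L i \<le> allocM N L H \<Omega> i \<and> allocM N L H \<Omega> i \<le> H i" unfolding phi by simp
  qed
qed

lemma agents_finite: "finite (agents n)" unfolding agents_def by simp
lemma agents_card: "card (agents n) = n" unfolding agents_def by simp

definition core :: "nat \<Rightarrow> (nat \<Rightarrow> ennreal) \<Rightarrow> (nat \<Rightarrow> ennreal) \<Rightarrow> real \<Rightarrow> nat \<Rightarrow> real" where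
  "core n lo hi \<Omega> i = (let N = agents n; c = \<Omega> / real n;
     L = (\<lambda>j. enn2real (min (lo j) (ennreal \<Omega>))); H = (\<lambda>j. enn2real (min (hi j) (ennreal \<Omega>)))
   in if ennreal \<Omega> \<le> (\<Sum>j\<in>N. lo j) then allocD N L c \<Omega> i
      else if (\<Sum>j\<in>N. hi j) \<le> ennreal \<Omega> then allocE N H c \<Omega> i else allocM N L H \<Omega> i)"

lemma ennreal_min_fin: "ennreal (enn2real (min a (ennreal \<Omega>))) = min a (ennreal \<Omega>)"
proof -
  have "min a (ennreal \<Omega>) < top" by (simp add: min_less_iff_disj)
  then show ?thesis by simp
qed

lemma sum_min_ge:
  fixes lo :: "nat \<Rightarrow> ennreal"
  assumes N: "finite N" and "0 \<le> \<Omega>" and le: "ennreal \<Omega> \<le> (\<Sum>j\<in>N. lo j)"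
  shows "\<Omega> \<le> (\<Sum>j\<in>N. enn2real (min (lo j) (ennreal \<Omega>)))"
proof (cases "\<exists>j\<in>N. ennreal \<Omega> \<le> lo j")
  case True
  then obtain j where j: "j \<in> N" "ennreal \<Omega> \<le> lo j" by blast
  then have "enn2real (min (lo j) (ennreal \<Omega>)) = \<Omega>" using assms by simp
  moreover have "enn2real (min (lo j) (ennreal \<Omega>)) \<le> (\<Sum>j\<in>N. enn2real (min (lo j) (ennreal \<Omega>)))"
    by (rule member_le_sum) (use j N in auto)
  ultimately show ?thesis by simp
next
  case False
  then have e: "min (lo j) (ennreal \<Omega>) = lo j" if "j \<in> N" for j using that by (auto simp: min_def)
  have "ennreal (\<Sum>j\<in>N. enn2real (min (lo j) (ennreal \<Omega>))) = (\<Sum>j\<in>N. ennreal (enn2real (min (lo j) (ennreal \<Omega>))))"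
    by (rule sum_ennreal[symmetric]) simp
  also have "\<dots> = (\<Sum>j\<in>N. lo j)" by (rule sum.cong[OF refl]) (subst ennreal_min_fin, rule e)
  finally have "ennreal \<Omega> \<le> ennreal (\<Sum>j\<in>N. enn2real (min (lo j) (ennreal \<Omega>)))" using le by simp
  then show ?thesis by (simp add: sum_nonneg)
qed

lemma core_props:
  fixes lo hi :: "nat \<Rightarrow> ennreal"
  assumes n: "2 \<le> n" and Om: "0 < \<Omega>" and lh: "\<forall>j\<in>agents n. lo j \<le> hi j"
  defines "\<phi> \<equiv> core n lo hi \<Omega>" and "c \<equiv> \<Omega> / real n"
  shows "sum \<phi> (agents n) = \<Omega>" "\<And>i. i \<in> agents n \<Longrightarrow> 0 \<le> \<phi> i"
    "(\<forall>i\<in>agents n. ennreal (\<phi> i) \<le> lo i \<and> (ennreal (\<phi> i) < lo i \<longrightarrow> c \<le> \<phi> i))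
     \<or> (\<forall>i\<in>agents n. hi i \<le> ennreal (\<phi> i) \<and> (hi i < ennreal (\<phi> i) \<longrightarrow> \<phi> i \<le> c))
     \<or> (\<forall>i\<in>agents n. lo i \<le> ennreal (\<phi> i) \<and> ennreal (\<phi> i) \<le> hi i)"
    "\<And>i. i \<in> agents n \<Longrightarrow> lo i \<le> ennreal c \<Longrightarrow> ennreal c \<le> hi i \<Longrightarrow> lo i \<le> ennreal (\<phi> i) \<and> ennreal (\<phi> i) \<le> hi i"
proof -
  define N where "N = agents n"
  define L where "L = (\<lambda>j. enn2real (min (lo j) (ennreal \<Omega>)))"
  define H where "H = (\<lambda>j. enn2real (min (hi j) (ennreal \<Omega>)))"
  have N: "finite N" "card N = n" unfolding N_def by (simp_all add: agents_finite agents_card)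
  have cpos: "0 < c" unfolding c_def using n Om by simp
  have OmN: "\<Omega> = real (card N) * c" unfolding c_def N using n by simp
  have cO: "c < \<Omega>"
  proof -
    have "1 * c < real n * c" using n cpos by (intro mult_strict_right_mono) auto
    then show ?thesis using OmN N by simp
  qed
  have Lfin: "ennreal (L j) = min (lo j) (ennreal \<Omega>)" for j unfolding L_def by (rule ennreal_min_fin)
  have Hfin: "ennreal (H j) = min (hi j) (ennreal \<Omega>)" for j unfolding H_def by (rule ennreal_min_fin)
  have L0: "0 \<le> L j" "0 \<le> H j" for j unfolding L_def H_def by simp_all
  have phi_eq: "\<phi> = (if ennreal \<Omega> \<le> (\<Sum>j\<in>N. lo j) then allocD N L c \<Omega>
      else if (\<Sum>j\<in>N. hi j) \<le> ennreal \<Omega> then allocE N H c \<Omega> else allocM N L H \<Omega>)"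
    unfolding \<phi>_def core_def[abs_def] N_def L_def H_def c_def Let_def by simp
  have all: "sum \<phi> N = \<Omega> \<and> (\<forall>i\<in>N. 0 \<le> \<phi> i) \<and>
    ((\<forall>i\<in>N. ennreal (\<phi> i) \<le> lo i \<and> (ennreal (\<phi> i) < lo i \<longrightarrow> c \<le> \<phi> i))
     \<or> (\<forall>i\<in>N. hi i \<le> ennreal (\<phi> i) \<and> (hi i < ennreal (\<phi> i) \<longrightarrow> \<phi> i \<le> c))
     \<or> (\<forall>i\<in>N. lo i \<le> ennreal (\<phi> i) \<and> ennreal (\<phi> i) \<le> hi i)) \<and>
    (\<forall>i\<in>N. lo i \<le> ennreal c \<longrightarrow> ennreal c \<le> hi i \<longrightarrow> lo i \<le> ennreal (\<phi> i) \<and> ennreal (\<phi> i) \<le> hi i)"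
  proof (cases "ennreal \<Omega> \<le> (\<Sum>j\<in>N. lo j)")
    case D: True
    then have phi: "\<phi> = allocD N L c \<Omega>" using phi_eq by simp
    have sL: "\<Omega> \<le> sum L N" unfolding L_def using sum_min_ge[OF N(1) _ D] Om by simp
    note P = allocD_props[OF N(1) OmN L0(1) sL less_imp_le[OF cpos], folded phi]
    have A: "\<phi> i = L i \<and> ennreal (\<phi> i) = lo i" if "i \<in> N" "L i \<le> c" for i
    proof -
      have "\<phi> i = L i" using P(2) that by simp
      moreover have "lo i < ennreal \<Omega>"
      proof (rule ccontr)
        assume "\<not> lo i < ennreal \<Omega>"
        then have "L i = \<Omega>" unfolding L_def using Om by (simp add: min_def)
        then show False using that cO by simp
      qed
      then have "ennreal (L i) = lo i" using Lfin[of i] by simp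
      ultimately show ?thesis by simp
    qed
    have B: "c \<le> \<phi> i \<and> ennreal (\<phi> i) \<le> lo i" if "i \<in> N" "c < L i" for i
    proof -
      have "c \<le> \<phi> i" "\<phi> i \<le> L i" using P(3) that by auto
      then have "ennreal (\<phi> i) \<le> ennreal (L i)" by (intro ennreal_leI) simp
      also have "\<dots> \<le> lo i" using Lfin[of i] by simp
      finally show ?thesis using \<open>c \<le> \<phi> i\<close> by simp
    qed
    have s: "sum \<phi> N = \<Omega>" by (rule P(1))
    have nn: "\<forall>i\<in>N. 0 \<le> \<phi> i" using A B L0 cpos by (metis less_imp_le not_le order_trans)
    have d1: "\<forall>i\<in>N. ennreal (\<phi> i) \<le> lo i \<and> (ennreal (\<phi> i) < lo i \<longrightarrow> c \<le> \<phi> i)"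
      using A B by (metis not_le order_refl less_irrefl)
    have ed: "\<forall>i\<in>N. lo i \<le> ennreal c \<longrightarrow> ennreal c \<le> hi i \<longrightarrow> lo i \<le> ennreal (\<phi> i) \<and> ennreal (\<phi> i) \<le> hi i"
    proof (intro ballI impI)
      fix i assume i: "i \<in> N" and "lo i \<le> ennreal c" "ennreal c \<le> hi i"
      then have "ennreal (L i) \<le> ennreal c" using Lfin[of i] by (metis min.coboundedI1)
      then have "L i \<le> c" using cpos by simp
      then have "ennreal (\<phi> i) = lo i" using A[OF i] by blast
      then show "lo i \<le> ennreal (\<phi> i) \<and> ennreal (\<phi> i) \<le> hi i" using lh i unfolding N_def by simp
    qed
    show ?thesis using s nn d1 ed by blast
  next
    case nD: False
    show ?thesis
    proof (cases "(\<Sum>j\<in>N. hi j) \<le> ennreal \<Omega>")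
      case E: True
      then have phi: "\<phi> = allocE N H c \<Omega>" using phi_eq nD by simp
      have hiO: "hi j \<le> ennreal \<Omega>" if "j \<in> N" for j
        using E member_le_sum[of j N hi] that N(1) by (meson order_trans zero_le)
      then have Hh: "ennreal (H j) = hi j" if "j \<in> N" for j using Hfin[of j] that by (simp add: min_def)
      have sH: "sum H N \<le> \<Omega>"
      proof -
        have "ennreal (sum H N) = (\<Sum>j\<in>N. ennreal (H j))" by (rule sum_ennreal[symmetric]) (simp add: L0)
        also have "\<dots> = (\<Sum>j\<in>N. hi j)" by (rule sum.cong[OF refl]) (simp add: Hh)
        finally have "ennreal (sum H N) \<le> ennreal \<Omega>" using E by simp
        then show ?thesis using less_imp_le[OF Om] by simp
      qed
      note P = allocE_props[OF N(1) OmN sH, folded phi]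
      have A: "ennreal (\<phi> i) = hi i" if "i \<in> N" "c \<le> H i" for i using P(2) that Hh by simp
      have B: "\<phi> i \<le> c \<and> hi i \<le> ennreal (\<phi> i)" if "i \<in> N" "H i < c" for i
      proof -
        have "H i \<le> \<phi> i" "\<phi> i \<le> c" using P(3) that by auto
        then show ?thesis using Hh[OF that(1)] L0(2)[of i] by (metis ennreal_leI)
      qed
      have nn: "\<forall>i\<in>N. 0 \<le> \<phi> i"
      proof
        fix i assume "i \<in> N"
        then show "0 \<le> \<phi> i" using P(2) P(3) L0(2)[of i] by (metis not_le order_trans)
      qed
      have d2: "\<forall>i\<in>N. hi i \<le> ennreal (\<phi> i) \<and> (hi i < ennreal (\<phi> i) \<longrightarrow> \<phi> i \<le> c)"
        using A B by (metis not_le order_refl less_irrefl)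
      have ed: "\<forall>i\<in>N. lo i \<le> ennreal c \<longrightarrow> ennreal c \<le> hi i \<longrightarrow> lo i \<le> ennreal (\<phi> i) \<and> ennreal (\<phi> i) \<le> hi i"
      proof (intro ballI impI)
        fix i assume i: "i \<in> N" and "lo i \<le> ennreal c" "ennreal c \<le> hi i"
        then have "ennreal c \<le> ennreal (H i)" using Hh by simp
        then have "c \<le> H i" using L0(2)[of i] by simp
        then have "ennreal (\<phi> i) = hi i" using A[OF i] by blast
        then show "lo i \<le> ennreal (\<phi> i) \<and> ennreal (\<phi> i) \<le> hi i" using lh i unfolding N_def by simp
      qed
      show ?thesis using P(1) nn d2 ed by blast
    next
      case nE: False
      then have phi: "\<phi> = allocM N L H \<Omega>" using phi_eq nD by simp
      have loO: "lo j < ennreal \<Omega>" if "j \<in> N" for j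
        using nD member_le_sum[of j N lo] that N(1) by (meson order_le_less_trans not_le zero_le)
      then have Ll: "ennreal (L j) = lo j" if "j \<in> N" for j using Lfin[of j] loO[OF that] by (metis min.absorb1 less_imp_le)
      have sL: "sum L N \<le> \<Omega>"
      proof -
        have "ennreal (sum L N) = (\<Sum>j\<in>N. ennreal (L j))" by (rule sum_ennreal[symmetric]) (simp add: L0)
        also have "\<dots> = (\<Sum>j\<in>N. lo j)" by (rule sum.cong[OF refl]) (simp add: Ll)
        finally have "ennreal (sum L N) \<le> ennreal \<Omega>" using nD by simp
        then show ?thesis using less_imp_le[OF Om] by simp
      qed
      have sH: "\<Omega> \<le> sum H N" unfolding H_def
        by (rule sum_min_ge[OF N(1)]) (use nE Om in auto)
      have LH: "L j \<le> H j" if "j \<in> N" for j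
      proof -
        have "ennreal (L j) \<le> ennreal (H j)" unfolding Lfin Hfin
          by (rule min.mono) (use lh that in \<open>auto simp: N_def\<close>)
        then show ?thesis using L0 by simp
      qed
      note P = allocM_props[OF N(1) LH sL sH, folded phi]
      have d3: "\<forall>i\<in>N. lo i \<le> ennreal (\<phi> i) \<and> ennreal (\<phi> i) \<le> hi i"
      proof
        fix i assume i: "i \<in> N"
        then have "L i \<le> \<phi> i" "\<phi> i \<le> H i" using P(2) by auto
        then have "ennreal (L i) \<le> ennreal (\<phi> i)" "ennreal (\<phi> i) \<le> ennreal (H i)"
          using L0 by (auto intro: ennreal_leI)
        then show "lo i \<le> ennreal (\<phi> i) \<and> ennreal (\<phi> i) \<le> hi i"
          using Ll[OF i] Hfin[of i] by (metis min.boundedE)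
      qed
      have nn: "\<forall>i\<in>N. 0 \<le> \<phi> i" using P(2) L0 by (meson order_trans)
      show ?thesis using P(1) nn d3 by blast
    qed
  qed
  then show "sum \<phi> (agents n) = \<Omega>" "\<And>i. i \<in> agents n \<Longrightarrow> 0 \<le> \<phi> i"
    "(\<forall>i\<in>agents n. ennreal (\<phi> i) \<le> lo i \<and> (ennreal (\<phi> i) < lo i \<longrightarrow> c \<le> \<phi> i))
     \<or> (\<forall>i\<in>agents n. hi i \<le> ennreal (\<phi> i) \<and> (hi i < ennreal (\<phi> i) \<longrightarrow> \<phi> i \<le> c))
     \<or> (\<forall>i\<in>agents n. lo i \<le> ennreal (\<phi> i) \<and> ennreal (\<phi> i) \<le> hi i)"
    "\<And>i. i \<in> agents n \<Longrightarrow> lo i \<le> ennreal c \<Longrightarrow> ennreal c \<le> hi i \<Longrightarrow> lo i \<le> ennreal (\<phi> i) \<and> ennreal (\<phi> i) \<le> hi i"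
    unfolding N_def by blast+
qed

lemma prof_mem: "R \<in> profiles D n \<Longrightarrow> j \<in> agents n \<Longrightarrow> R j \<in> D"
  unfolding profiles_def by (rule PiE_mem)

lemma prof_upd: "R \<in> profiles D n \<Longrightarrow> i \<in> agents n \<Longrightarrow> R' \<in> D \<Longrightarrow> R(i := R') \<in> profiles D n"
proof -
  assume a: "R \<in> profiles D n" "i \<in> agents n" "R' \<in> D"
  have "R(i := R') \<in> Pi\<^sub>E (insert i (agents n)) (\<lambda>_. D)"
    by (rule PiE_fun_upd) (use a in \<open>auto simp: profiles_def\<close>)
  then show ?thesis using a(2) unfolding profiles_def by (simp add: insert_absorb)
qed

lemma strict_irrefl: "\<not> strict R x x" unfolding strict_def by simp

lemma EDG_peak:
  assumes rule: "is_rule D n \<phi>" and edg: "equal_division_guarantee D n \<phi>"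
    and R: "R \<in> profiles D n" and Om: "\<Omega> > 0" and i: "i \<in> agents n" and RU: "R i \<in> U"
    and pk: "peak (R i) = {ennreal (\<Omega> / real n)}" and n: "n > 0"
  shows "\<phi> R \<Omega> i = \<Omega> / real n"
proof -
  have "indiff (R i) (ennreal (\<phi> R \<Omega> i)) (ennreal (\<Omega> / real n))"
    using edg R Om i pk unfolding equal_division_guarantee_def by blast
  then have "R i (ennreal (\<phi> R \<Omega> i)) (ennreal (\<Omega> / real n))" unfolding indiff_def by blast
  then have "ennreal (\<phi> R \<Omega> i) \<in> peak (R i)" using in_peak_trans[OF RU] pk by blast
  then have "ennreal (\<phi> R \<Omega> i) = ennreal (\<Omega> / real n)" using pk by blast
  moreover have "0 \<le> \<phi> R \<Omega> i" using rule R Om i unfolding is_rule_def by blast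
  moreover have "0 \<le> \<Omega> / real n" using Om by simp
  ultimately show ?thesis by simp
qed

definition urule :: "nat \<Rightarrow> rule" where
  "urule n R \<Omega> i = core n (\<lambda>j. peak_lo (R j)) (\<lambda>j. peak_hi (R j)) \<Omega> i"

lemma urule_props:
  assumes n: "2 \<le> n" and R: "R \<in> profiles SPL n" and Om: "0 < \<Omega>"
  defines "\<phi> \<equiv> urule n R \<Omega>" and "c \<equiv> \<Omega> / real n"
  shows "sum \<phi> (agents n) = \<Omega>" "\<And>i. i \<in> agents n \<Longrightarrow> 0 \<le> \<phi> i"
    "\<And>i. i \<in> agents n \<Longrightarrow> R i (ennreal (\<phi> i)) (ennreal c)"
    "\<And>i. i \<in> agents n \<Longrightarrow> ennreal c \<in> peak (R i) \<Longrightarrow> ennreal (\<phi> i) \<in> peak (R i)"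
    "\<not> (\<exists>x::nat \<Rightarrow> real. (\<forall>i\<in>agents n. 0 \<le> x i) \<and> (\<Sum>i\<in>agents n. x i) = \<Omega> \<and>
            (\<forall>i\<in>agents n. R i (ennreal (x i)) (ennreal (\<phi> i))) \<and>
            (\<exists>i\<in>agents n. strict (R i) (ennreal (x i)) (ennreal (\<phi> i))))"
proof -
  have RS: "R j \<in> SPL" if "j \<in> agents n" for j using prof_mem[OF R that] .
  have lh: "\<And>j. j \<in> agents n \<Longrightarrow> peak_lo (R j) \<le> peak_hi (R j)" using peak_lo_hi SPL_U RS by blast
  have phi: "\<phi> = core n (\<lambda>j. peak_lo (R j)) (\<lambda>j. peak_hi (R j)) \<Omega>" unfolding \<phi>_def urule_def[abs_def] by simp
  define lo where "lo = (\<lambda>j. peak_lo (R j))"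
  define hi where "hi = (\<lambda>j. peak_hi (R j))"
  have lh': "\<forall>j\<in>agents n. lo j \<le> hi j" using lh unfolding lo_def hi_def by simp
  have phi': "\<phi> = core n lo hi \<Omega>" unfolding phi lo_def hi_def ..
  note P0 = core_props[OF n Om lh', folded phi' c_def]
  note P = P0[unfolded lo_def hi_def]
  have cpos: "0 \<le> c" unfolding c_def using Om by simp
  have P4: "\<And>i. i \<in> agents n \<Longrightarrow> peak_lo (R i) \<le> ennreal c \<Longrightarrow> ennreal c \<le> peak_hi (R i) \<Longrightarrow> peak_lo (R i) \<le> ennreal (\<phi> i) \<and> ennreal (\<phi> i) \<le> peak_hi (R i)"
    using P(4) by blast
  show "sum \<phi> (agents n) = \<Omega>" "\<And>i. i \<in> agents n \<Longrightarrow> 0 \<le> \<phi> i" using P(1,2) by auto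
  have inpk: "ennreal (\<phi> i) \<in> peak (R i)" if "i \<in> agents n" "peak_lo (R i) \<le> ennreal (\<phi> i)" "ennreal (\<phi> i) \<le> peak_hi (R i)" for i
    using SPL_in_peak[OF RS[OF that(1)] that(2,3)] .
  show "\<And>i. i \<in> agents n \<Longrightarrow> ennreal c \<in> peak (R i) \<Longrightarrow> ennreal (\<phi> i) \<in> peak (R i)"
  proof -
    fix i assume i: "i \<in> agents n" and "ennreal c \<in> peak (R i)"
    then have "peak_lo (R i) \<le> ennreal c" "ennreal c \<le> peak_hi (R i)" using peak_lo_le peak_hi_ge by auto
    then show "ennreal (\<phi> i) \<in> peak (R i)" using P4[OF i] inpk[OF i] by blast
  qed
  show "\<And>i. i \<in> agents n \<Longrightarrow> R i (ennreal (\<phi> i)) (ennreal c)"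
  proof -
    fix i assume i: "i \<in> agents n"
    have nn: "0 \<le> \<phi> i" using P(2)[OF i] .
    have lo_in: "peak_lo (R i) \<in> peak (R i)" "peak_hi (R i) \<in> peak (R i)"
      using peak_lo_in peak_hi_in SPL_U[OF RS[OF i]] by auto
    from P(3) show "R i (ennreal (\<phi> i)) (ennreal c)"
    proof (elim disjE)
      assume "\<forall>i\<in>agents n. ennreal (\<phi> i) \<le> peak_lo (R i) \<and> (ennreal (\<phi> i) < peak_lo (R i) \<longrightarrow> c \<le> \<phi> i)"
      then have a: "ennreal (\<phi> i) \<le> peak_lo (R i)" "ennreal (\<phi> i) < peak_lo (R i) \<Longrightarrow> c \<le> \<phi> i" using i by auto
      show ?thesis
      proof (cases "ennreal (\<phi> i) < peak_lo (R i)")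
        case True
        then show ?thesis using SPL_weak_left[OF RS[OF i] cpos a(2)[OF True] a(1)] by simp
      next
        case False
        then have "ennreal (\<phi> i) = peak_lo (R i)" using a(1) by simp
        then show ?thesis using peak_best lo_in by metis
      qed
    next
      assume "\<forall>i\<in>agents n. peak_hi (R i) \<le> ennreal (\<phi> i) \<and> (peak_hi (R i) < ennreal (\<phi> i) \<longrightarrow> \<phi> i \<le> c)"
      then have a: "peak_hi (R i) \<le> ennreal (\<phi> i)" "peak_hi (R i) < ennreal (\<phi> i) \<Longrightarrow> \<phi> i \<le> c" using i by auto
      show ?thesis
      proof (cases "peak_hi (R i) < ennreal (\<phi> i)")
        case True
        then show ?thesis using SPL_weak_right[OF RS[OF i] nn a(2)[OF True] a(1)] by simp
      next
        case False
        then have "ennreal (\<phi> i) = peak_hi (R i)" using a(1) by simp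
        then show ?thesis using peak_best lo_in by metis
      qed
    next
      assume "\<forall>i\<in>agents n. peak_lo (R i) \<le> ennreal (\<phi> i) \<and> ennreal (\<phi> i) \<le> peak_hi (R i)"
      then show ?thesis using inpk[OF i] i peak_best by blast
    qed
  qed
  show "\<not> (\<exists>x::nat \<Rightarrow> real. (\<forall>i\<in>agents n. 0 \<le> x i) \<and> (\<Sum>i\<in>agents n. x i) = \<Omega> \<and>
            (\<forall>i\<in>agents n. R i (ennreal (x i)) (ennreal (\<phi> i))) \<and>
            (\<exists>i\<in>agents n. strict (R i) (ennreal (x i)) (ennreal (\<phi> i))))"
  proof
    assume "\<exists>x::nat \<Rightarrow> real. (\<forall>i\<in>agents n. 0 \<le> x i) \<and> (\<Sum>i\<in>agents n. x i) = \<Omega> \<and>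
            (\<forall>i\<in>agents n. R i (ennreal (x i)) (ennreal (\<phi> i))) \<and>
            (\<exists>i\<in>agents n. strict (R i) (ennreal (x i)) (ennreal (\<phi> i)))"
    then obtain x :: "nat \<Rightarrow> real" and k where x0: "\<forall>i\<in>agents n. 0 \<le> x i" and xs: "(\<Sum>i\<in>agents n. x i) = \<Omega>"
      and xR: "\<forall>i\<in>agents n. R i (ennreal (x i)) (ennreal (\<phi> i))"
      and k: "k \<in> agents n" "strict (R k) (ennreal (x k)) (ennreal (\<phi> k))" by blast
    have fin: "finite (agents n)" by (rule agents_finite)
    have ps: "sum \<phi> (agents n) = \<Omega>" using P(1) .
    from P(3) show False
    proof (elim disjE)
      assume a: "\<forall>i\<in>agents n. ennreal (\<phi> i) \<le> peak_lo (R i) \<and> (ennreal (\<phi> i) < peak_lo (R i) \<longrightarrow> c \<le> \<phi> i)"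
      have ge: "\<phi> i \<le> x i" if i: "i \<in> agents n" for i
      proof (rule ccontr)
        assume "\<not> \<phi> i \<le> x i"
        then have "strict (R i) (ennreal (\<phi> i)) (ennreal (x i))"
          using SPL_strict_left[OF RS[OF i]] x0 i a by auto
        then show False using xR i unfolding strict_def by blast
      qed
      have "(\<Sum>i\<in>agents n. x i - \<phi> i) = 0" using xs ps by (simp add: sum_subtractf)
      then have "\<forall>i\<in>agents n. x i - \<phi> i = 0"
        using sum_nonneg_eq_0_iff[OF fin, of "\<lambda>i. x i - \<phi> i"] ge by simp
      then have "x k = \<phi> k" using k by simp
      then show False using k strict_irrefl by metis
    next
      assume a: "\<forall>i\<in>agents n. peak_hi (R i) \<le> ennreal (\<phi> i) \<and> (peak_hi (R i) < ennreal (\<phi> i) \<longrightarrow> \<phi> i \<le> c)"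
      have ge: "x i \<le> \<phi> i" if i: "i \<in> agents n" for i
      proof (rule ccontr)
        assume "\<not> x i \<le> \<phi> i"
        then have "strict (R i) (ennreal (\<phi> i)) (ennreal (x i))"
          using SPL_strict_right[OF RS[OF i]] P(2)[OF i] i a by auto
        then show False using xR i unfolding strict_def by blast
      qed
      have "(\<Sum>i\<in>agents n. \<phi> i - x i) = 0" using xs ps by (simp add: sum_subtractf)
      then have "\<forall>i\<in>agents n. \<phi> i - x i = 0"
        using sum_nonneg_eq_0_iff[OF fin, of "\<lambda>i. \<phi> i - x i"] ge by simp
      then have "x k = \<phi> k" using k by simp
      then show False using k strict_irrefl by metis
    next
      assume "\<forall>i\<in>agents n. peak_lo (R i) \<le> ennreal (\<phi> i) \<and> ennreal (\<phi> i) \<le> peak_hi (R i)"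
      then have "ennreal (\<phi> k) \<in> peak (R k)" using inpk k(1) by blast
      then have "R k (ennreal (\<phi> k)) (ennreal (x k))" by (rule peak_best)
      then show False using k unfolding strict_def by blast
    qed
  qed
qed

lemma urule_is_rule: "2 \<le> n \<Longrightarrow> is_rule SPL n (urule n)"
  unfolding is_rule_def using urule_props(1,2) by blast

lemma urule_edg: "2 \<le> n \<Longrightarrow> equal_division_guarantee SPL n (urule n)"
  unfolding equal_division_guarantee_def indiff_def
  using urule_props(4) peak_best by blast

lemma urule_eff: "2 \<le> n \<Longrightarrow> efficient SPL n (urule n)"
  unfolding efficient_def using urule_props(5) by blast

lemma urule_opo: "own_peak_only SPL n (urule n)"
  unfolding own_peak_only_def
proof (intro ballI allI impI)
  fix R :: "nat \<Rightarrow> pref" and \<Omega> :: real and i :: nat and R' :: pref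
  assume "peak R' = peak (R i)"
  then have "(\<lambda>j. peak_lo ((R(i := R')) j)) = (\<lambda>j. peak_lo (R j))"
    "(\<lambda>j. peak_hi ((R(i := R')) j)) = (\<lambda>j. peak_hi (R j))"
    unfolding peak_lo_def peak_hi_def by (auto simp: fun_eq_iff)
  then show "urule n R \<Omega> i = urule n (R(i := R')) \<Omega> i" unfolding urule_def by simp
qed

lemma sum_split_c:
  assumes i: "i \<in> agents n" and n: "n > 0"
    and others: "\<And>j. j \<in> agents n \<Longrightarrow> j \<noteq> i \<Longrightarrow> f j = \<Omega> / real n"
    and s: "sum f (agents n) = \<Omega>"
  shows "f i = \<Omega> / real n"
proof -
  have "sum f (agents n) = f i + sum f (agents n - {i})"
    using i agents_finite by (simp add: sum.remove)
  also have "sum f (agents n - {i}) = sum (\<lambda>_. \<Omega> / real n) (agents n - {i})"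
    by (rule sum.cong) (auto simp: others)
  also have "\<dots> = real (n - 1) * (\<Omega> / real n)" using i agents_finite agents_card[of n] by simp
  finally have "\<Omega> = f i + real (n - 1) * (\<Omega> / real n)" using s by simp
  moreover have "real (n - 1) = real n - 1" using n by simp
  ultimately show ?thesis using n by (simp add: field_simps)
qed

lemma urule_nom:
  assumes n: "2 \<le> n"
  shows "NOM SPL n (urule n)"
  unfolding NOM_def
proof (intro ballI allI impI notI)
  fix i Ri \<Omega> Ri'
  assume i: "i \<in> agents n" and Ri: "Ri \<in> SPL" and Om: "0 < \<Omega>"
    and om: "obvious_manipulation SPL n (urule n) i Ri \<Omega> Ri'"
  define c where "c = \<Omega> / real n"
  have c0: "0 \<le> c" unfolding c_def using Om by simp
  have Ri': "Ri' \<in> SPL" using om unfolding obvious_manipulation_def manipulation_def by blast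
  define R' where "R' = (\<lambda>j. if j \<in> agents n then (if j = i then Ri' else pfam (ennreal c) (ennreal c) 1) else undefined)"
  have pS: "pfam (ennreal c) (ennreal c) 1 \<in> SPL" by (rule pfam_SPL) auto
  have R'p: "R' \<in> profiles SPL n"
    unfolding profiles_def PiE_iff R'_def extensional_def using Ri' pS by auto
  have R'i: "R' i = Ri'" unfolding R'_def using i by simp
  have oth: "urule n R' \<Omega> j = c" if j: "j \<in> agents n" "j \<noteq> i" for j
  proof -
    have "R' j = pfam (ennreal c) (ennreal c) 1" unfolding R'_def using j by simp
    then have pk: "peak (R' j) = {ennreal (\<Omega> / real n)}" "R' j \<in> U"
      using peak_pfam[of "ennreal c" "ennreal c" 1] pfam_U unfolding c_def by auto
    show ?thesis unfolding c_def
      by (rule EDG_peak[OF urule_is_rule[OF n] urule_edg[OF n] R'p Om j(1) pk(2) pk(1)]) (use n in simp)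
  qed
  have "urule n R' \<Omega> i = c" unfolding c_def
    by (rule sum_split_c[OF i]) (use n oth urule_props(1)[OF n R'p Om] in \<open>auto simp: c_def\<close>)
  then have cin: "c \<in> option_set SPL n (urule n) i Ri' \<Omega>"
    unfolding option_set_def using R'p R'i by force
  then obtain x where x: "x \<in> option_set SPL n (urule n) i Ri \<Omega>" "strict Ri (ennreal c) (ennreal x)"
    using om unfolding obvious_manipulation_def by blast
  then obtain R where R: "R \<in> profiles SPL n" "R i = Ri" "x = urule n R \<Omega> i"
    unfolding option_set_def by blast
  have "R i (ennreal (urule n R \<Omega> i)) (ennreal c)" unfolding c_def by (rule urule_props(3)[OF n R(1) Om i])
  then show False using x(2) R unfolding strict_def by simp
qed

theorem part2: "2 \<le> n \<Longrightarrow> \<exists>\<phi>. good_rule SPL n \<phi>"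
  unfolding good_rule_def
  using urule_is_rule urule_opo urule_eff urule_edg urule_nom by blast

definition mkprof :: "nat \<Rightarrow> (nat \<Rightarrow> pref) \<Rightarrow> nat \<Rightarrow> pref" where
  "mkprof n f = (\<lambda>j. if j \<in> agents n then f j else undefined)"

lemma mkprof_in: "(\<And>j. j \<in> agents n \<Longrightarrow> f j \<in> D) \<Longrightarrow> mkprof n f \<in> profiles D n"
  unfolding mkprof_def profiles_def PiE_iff extensional_def by auto

lemma mkprof_app: "j \<in> agents n \<Longrightarrow> mkprof n f j = f j"
  unfolding mkprof_def by simp

lemma mkprof_upd: "i \<in> agents n \<Longrightarrow> (mkprof n f)(i := X) = mkprof n (f(i := X))"
  unfolding mkprof_def by (auto simp: fun_eq_iff)

lemma agents_12: "2 \<le> n \<Longrightarrow> 1 \<in> agents n" "2 \<le> n \<Longrightarrow> 2 \<in> agents n"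
  unfolding agents_def by auto

lemma all_eq_ge:
  assumes "finite N" "\<And>j. j \<in> N \<Longrightarrow> a \<le> f j" "sum f N = real (card N) * a" "j \<in> N"
  shows "f j = (a::real)"
proof -
  have "(\<Sum>j\<in>N. f j - a) = 0" using assms(3) by (simp add: sum_subtractf)
  then have "\<forall>j\<in>N. f j - a = 0" using sum_nonneg_eq_0_iff[OF assms(1), of "\<lambda>j. f j - a"] assms(2) by simp
  then show ?thesis using assms(4) by simp
qed

lemma all_eq_le:
  assumes "finite N" "\<And>j. j \<in> N \<Longrightarrow> f j \<le> a" "sum f N = real (card N) * a" "j \<in> N"
  shows "f j = (a::real)"
proof -
  have "(\<Sum>j\<in>N. a - f j) = 0" using assms(3) by (simp add: sum_subtractf)
  then have "\<forall>j\<in>N. a - f j = 0" using sum_nonneg_eq_0_iff[OF assms(1), of "\<lambda>j. a - f j"] assms(2) by simp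
  then show ?thesis using assms(4) by simp
qed

lemma sum_12:
  assumes n: "2 \<le> n" and oth: "\<And>j. j \<in> agents n \<Longrightarrow> j \<noteq> 1 \<Longrightarrow> j \<noteq> 2 \<Longrightarrow> f j = c"
  shows "sum f (agents n) = f 1 + f 2 + real (n - 2) * (c::real)"
proof -
  have fin: "finite (agents n)" by (rule agents_finite)
  have i1: "1 \<in> agents n" and i2: "2 \<in> agents n - {1}" using agents_12[OF n] by auto
  have "sum f (agents n) = f 1 + sum f (agents n - {1})" using i1 fin by (simp add: sum.remove)
  also have "sum f (agents n - {1}) = f 2 + sum f (agents n - {1} - {2})" using i2 fin by (simp add: sum.remove)
  also have "sum f (agents n - {1} - {2}) = sum (\<lambda>_. c) (agents n - {1} - {2})"
    by (rule sum.cong) (auto simp: oth)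
  also have "\<dots> = real (n - 2) * c"
  proof -
    have "card (agents n - {1} - {2}) = n - 2" using i1 i2 fin agents_card[of n] by simp
    then show ?thesis by simp
  qed
  finally show ?thesis by simp
qed

lemma good_parts:
  assumes "good_rule D n \<phi>"
  shows "is_rule D n \<phi>" "own_peak_only D n \<phi>" "efficient D n \<phi>" "equal_division_guarantee D n \<phi>" "NOM D n \<phi>"
  using assms unfolding good_rule_def by auto

lemma lemA:
  assumes n: "2 \<le> n" and DS: "SPL \<subseteq> D" and DU: "D \<subseteq> U" and g: "good_rule D n \<phi>"
    and R: "R \<in> profiles D n" and Om: "0 < \<Omega>" and i: "i \<in> agents n"
  shows "R i (ennreal (\<phi> R \<Omega> i)) (ennreal (\<Omega> / real n))"
proof (rule ccontr)
  note gp = good_parts[OF g]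
  define c where "c = \<Omega> / real n"
  assume "\<not> R i (ennreal (\<phi> R \<Omega> i)) (ennreal (\<Omega> / real n))"
  then have st: "strict (R i) (ennreal c) (ennreal (\<phi> R \<Omega> i))"
    unfolding c_def using U_not_R DU prof_mem[OF R i] by blast
  define R2 where "R2 = pfam (ennreal c) (ennreal c) 1"
  have R2D: "R2 \<in> D" unfolding R2_def using pfam_SPL[of "ennreal c" "ennreal c" 1] DS by auto
  have R2pk: "peak R2 = {ennreal (\<Omega> / real n)}" "R2 \<in> U" unfolding R2_def c_def using peak_pfam pfam_U by auto
  have val: "\<phi> S \<Omega> i = c" if S: "S \<in> profiles D n" "S i = R2" for S
    unfolding c_def by (rule EDG_peak[OF gp(1) gp(4) S(1) Om i]) (use S R2pk n in auto)
  have RiD: "R i \<in> D" using prof_mem[OF R i] .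
  have "obvious_manipulation D n \<phi> i (R i) \<Omega> R2"
    unfolding obvious_manipulation_def manipulation_def
  proof (intro conjI)
    show "R2 \<in> D" by (rule R2D)
    have "\<phi> (R(i := R2)) \<Omega> i = c" by (rule val) (auto intro: prof_upd[OF R i R2D])
    then have "strict (R i) (ennreal (\<phi> (R(i := R2)) \<Omega> i)) (ennreal (\<phi> R \<Omega> i))" using st by simp
    then show "\<exists>S\<in>profiles D n. S i = R i \<and> strict (R i) (ennreal (\<phi> (S(i := R2)) \<Omega> i)) (ennreal (\<phi> S \<Omega> i))"
      using R by blast
    show "\<forall>x'\<in>option_set D n \<phi> i R2 \<Omega>. \<exists>x\<in>option_set D n \<phi> i (R i) \<Omega>. strict (R i) (ennreal x') (ennreal x)"
    proof
      fix x' assume "x' \<in> option_set D n \<phi> i R2 \<Omega>"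
      then obtain S where "S \<in> profiles D n" "S i = R2" "x' = \<phi> S \<Omega> i" unfolding option_set_def by blast
      then have "x' = c" using val by simp
      moreover have "\<phi> R \<Omega> i \<in> option_set D n \<phi> i (R i) \<Omega>" unfolding option_set_def using R by blast
      ultimately show "\<exists>x\<in>option_set D n \<phi> i (R i) \<Omega>. strict (R i) (ennreal x') (ennreal x)" using st by blast
    qed
  qed
  then show False using gp(5) i RiD Om unfolding NOM_def by blast
qed

lemma eff_contra:
  assumes e: "efficient D n \<phi>" and P: "P \<in> profiles D n" and Om: "0 < \<Omega>"
    and y0: "\<forall>i\<in>agents n. 0 \<le> y i" and ys: "(\<Sum>i\<in>agents n. y i) = \<Omega>"
    and yR: "\<forall>i\<in>agents n. P i (ennreal (y i)) (ennreal (\<phi> P \<Omega> i))"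
    and yS: "k \<in> agents n" "strict (P k) (ennreal (y k)) (ennreal (\<phi> P \<Omega> k))"
  shows False
  using e P Om y0 ys yR yS unfolding efficient_def by blast

lemma opo_use:
  assumes "own_peak_only D n \<phi>" "R \<in> profiles D n" "0 < \<Omega>" "i \<in> agents n" "R' \<in> D" "peak R' = peak (R i)"
  shows "\<phi> R \<Omega> i = \<phi> (R(i := R')) \<Omega> i"
  using assms unfolding own_peak_only_def by blast

lemma caseL:
  assumes n: "2 \<le> n" and DS: "SPL \<subseteq> D" and DU: "D \<subseteq> U" and g: "good_rule D n \<phi>"
    and Rb: "Rb \<in> D" and pk: "peak Rb = {peak_lo Rb..peak_hi Rb}"
    and b: "0 \<le> b" "b < a" and a: "ennreal a \<le> peak_lo Rb" and ba: "Rb (ennreal b) (ennreal a)"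
  shows False
proof -
  note gp = good_parts[OF g]
  have RbU: "Rb \<in> U" using Rb DU by auto
  have a0: "0 < a" using b by simp
  define \<Omega> where "\<Omega> = real n * a"
  have Om: "0 < \<Omega>" unfolding \<Omega>_def using n a0 by simp
  have c: "\<Omega> / real n = a" unfolding \<Omega>_def using n by simp
  define Rs where "Rs = pfam (peak_lo Rb) (peak_hi Rb) 1"
  have lh: "peak_lo Rb \<le> peak_hi Rb" by (rule peak_lo_hi[OF RbU])
  have RsS: "Rs \<in> SPL" unfolding Rs_def by (rule pfam_SPL[OF lh]) simp
  have RsD: "Rs \<in> D" using RsS DS by auto
  have Rspk: "peak Rs = peak Rb" unfolding Rs_def pk by (rule peak_pfam[OF lh]) simp
  have Rslo: "peak_lo Rs = peak_lo Rb" unfolding Rs_def by (rule pfam_lo_hi(1)[OF lh]) simp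
  define RO where "RO = pfam (ennreal \<Omega>) (ennreal \<Omega>) 1"
  have ROS: "RO \<in> SPL" unfolding RO_def by (rule pfam_SPL) auto
  have ROlo: "peak_lo RO = ennreal \<Omega>" unfolding RO_def by (rule pfam_lo_hi(1)) auto
  define f where "f = (\<lambda>j::nat. if j = 1 then Rb else RO)"
  define P where "P = mkprof n f"
  have P: "P \<in> profiles D n" unfolding P_def by (rule mkprof_in) (use Rb ROS DS in \<open>auto simp: f_def\<close>)
  have i1: "1 \<in> agents n" and i2: "2 \<in> agents n" using agents_12[OF n] by auto
  have P1: "P 1 = Rb" unfolding P_def f_def using mkprof_app[OF i1] by simp
  have Pj: "P j = RO" if "j \<in> agents n" "j \<noteq> 1" for j unfolding P_def f_def using mkprof_app[OF that(1)] that by simp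
  define x where "x = \<phi> P \<Omega>"
  have x1: "a \<le> x 1"
  proof (rule ccontr)
    assume "\<not> a \<le> x 1"
    have "x 1 = \<phi> (P(1 := Rs)) \<Omega> 1" unfolding x_def
      by (rule opo_use[OF gp(2) P Om i1 RsD]) (simp only: P1 Rspk)
    moreover have P1': "P(1 := Rs) \<in> profiles D n" by (rule prof_upd[OF P i1 RsD])
    ultimately have "Rs (ennreal (x 1)) (ennreal a)"
      using lemA[OF n DS DU g P1' Om i1] c by simp
    moreover have "0 \<le> x 1" using gp(1) P Om i1 unfolding is_rule_def x_def by blast
    then have "strict Rs (ennreal a) (ennreal (x 1))"
      using SPL_strict_left[OF RsS] \<open>\<not> a \<le> x 1\<close> a Rslo by simp
    ultimately show False unfolding strict_def by blast
  qed
  have xj: "a \<le> x j" if j: "j \<in> agents n" "j \<noteq> 1" for j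
  proof (rule ccontr)
    assume "\<not> a \<le> x j"
    have "RO (ennreal (x j)) (ennreal a)" using lemA[OF n DS DU g P Om j(1)] c Pj[OF j] unfolding x_def by simp
    moreover have "0 \<le> x j" using gp(1) P Om j unfolding is_rule_def x_def by blast
    moreover have "ennreal a \<le> peak_lo RO" unfolding ROlo \<Omega>_def using n a0 by simp
    ultimately show False using SPL_strict_left[OF ROS] \<open>\<not> a \<le> x j\<close> unfolding strict_def by auto
  qed
  have xs0: "sum x (agents n) = \<Omega>"
    using gp(1) P Om unfolding is_rule_def x_def by blast
  have xs: "sum x (agents n) = real (card (agents n)) * a"
    unfolding xs0 agents_card \<Omega>_def ..
  have xge: "a \<le> x j" if "j \<in> agents n" for j
  proof (cases "j = 1")
    case True then show ?thesis using x1 by simp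
  next
    case False then show ?thesis using xj that by simp
  qed
  have xa: "x j = a" if "j \<in> agents n" for j
    by (rule all_eq_ge[OF agents_finite xge xs that])
  define y where "y = (\<lambda>j::nat. if j = 1 then b else if j = 2 then 2 * a - b else a)"
  show False
  proof (rule eff_contra[OF gp(3) P Om])
    show "\<forall>i\<in>agents n. 0 \<le> y i" unfolding y_def using b a0 by auto
    have "sum y (agents n) = y 1 + y 2 + real (n - 2) * a" by (rule sum_12[OF n]) (simp add: y_def)
    then show "(\<Sum>i\<in>agents n. y i) = \<Omega>" unfolding y_def \<Omega>_def using n by (simp add: of_nat_diff algebra_simps)
    have st2: "strict RO (ennreal (2 * a - b)) (ennreal a)"
    proof (rule SPL_strict_left[OF ROS])
      show "0 \<le> a" using a0 by simp
      show "a < 2 * a - b" using b by simp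
      have "2 * a \<le> real n * a" using n a0 by (intro mult_right_mono) auto
      then have "2 * a - b \<le> real n * a" using b by linarith
      then show "ennreal (2 * a - b) \<le> peak_lo RO" unfolding ROlo \<Omega>_def by (simp add: ennreal_leI)
    qed
    show "\<forall>i\<in>agents n. P i (ennreal (y i)) (ennreal (\<phi> P \<Omega> i))"
      unfolding x_def[symmetric]
    proof
      fix i assume i: "i \<in> agents n"
      show "P i (ennreal (y i)) (ennreal (x i))"
      proof (cases "i = 1")
        case True then show ?thesis using ba P1 xa[OF i] by (simp add: y_def)
      next
        case False
        note F = False
        show ?thesis
        proof (cases "i = 2")
          case True then show ?thesis using st2 Pj[OF i F] xa[OF i] unfolding strict_def by (simp add: y_def)
        next
          case False
          then have "y i = a" unfolding y_def using F by simp
          then show ?thesis using U_refl[OF SPL_U[OF ROS]] Pj[OF i F] xa[OF i] by simp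
        qed
      qed
    qed
    show "2 \<in> agents n" by (rule i2)
    show "strict (P 2) (ennreal (y 2)) (ennreal (\<phi> P \<Omega> 2))"
      using st2 Pj[OF i2] xa[OF i2] unfolding x_def by (simp add: y_def)
  qed
qed

lemma caseR:
  assumes n: "2 \<le> n" and DS: "SPL \<subseteq> D" and DU: "D \<subseteq> U" and g: "good_rule D n \<phi>"
    and Rb: "Rb \<in> D" and pk: "peak Rb = {peak_lo Rb..peak_hi Rb}"
    and b: "0 \<le> a" "a < b" "b \<le> 2 * a" and a: "peak_hi Rb \<le> ennreal a" and ba: "Rb (ennreal b) (ennreal a)"
  shows False
proof -
  note gp = good_parts[OF g]
  have RbU: "Rb \<in> U" using Rb DU by auto
  have a0: "0 < a" using b by simp
  define \<Omega> where "\<Omega> = real n * a"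
  have Om: "0 < \<Omega>" unfolding \<Omega>_def using n a0 by simp
  have c: "\<Omega> / real n = a" unfolding \<Omega>_def using n by simp
  define Rs where "Rs = pfam (peak_lo Rb) (peak_hi Rb) 1"
  have lh: "peak_lo Rb \<le> peak_hi Rb" by (rule peak_lo_hi[OF RbU])
  have RsS: "Rs \<in> SPL" unfolding Rs_def by (rule pfam_SPL[OF lh]) simp
  have RsD: "Rs \<in> D" using RsS DS by auto
  have Rspk: "peak Rs = peak Rb" unfolding Rs_def pk by (rule peak_pfam[OF lh]) simp
  have Rslo: "peak_hi Rs = peak_hi Rb" unfolding Rs_def by (rule pfam_lo_hi(2)[OF lh]) simp
  define RO where "RO = pfam 0 0 1"
  have ROS: "RO \<in> SPL" unfolding RO_def by (rule pfam_SPL) auto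
  have ROlo: "peak_hi RO = 0" unfolding RO_def by (rule pfam_lo_hi(2)) auto
  define f where "f = (\<lambda>j::nat. if j = 1 then Rb else RO)"
  define P where "P = mkprof n f"
  have P: "P \<in> profiles D n" unfolding P_def by (rule mkprof_in) (use Rb ROS DS in \<open>auto simp: f_def\<close>)
  have i1: "1 \<in> agents n" and i2: "2 \<in> agents n" using agents_12[OF n] by auto
  have P1: "P 1 = Rb" unfolding P_def f_def using mkprof_app[OF i1] by simp
  have Pj: "P j = RO" if "j \<in> agents n" "j \<noteq> 1" for j unfolding P_def f_def using mkprof_app[OF that(1)] that by simp
  define x where "x = \<phi> P \<Omega>"
  have x1: "x 1 \<le> a"
  proof (rule ccontr)
    assume "\<not> x 1 \<le> a"
    have "x 1 = \<phi> (P(1 := Rs)) \<Omega> 1" unfolding x_def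
      by (rule opo_use[OF gp(2) P Om i1 RsD]) (simp only: P1 Rspk)
    moreover have P1': "P(1 := Rs) \<in> profiles D n" by (rule prof_upd[OF P i1 RsD])
    ultimately have "Rs (ennreal (x 1)) (ennreal a)"
      using lemA[OF n DS DU g P1' Om i1] c by simp
    moreover have "strict Rs (ennreal a) (ennreal (x 1))"
      using SPL_strict_right[OF RsS] \<open>\<not> x 1 \<le> a\<close> a Rslo b by simp
    ultimately show False unfolding strict_def by blast
  qed
  have xj: "x j \<le> a" if j: "j \<in> agents n" "j \<noteq> 1" for j
  proof (rule ccontr)
    assume "\<not> x j \<le> a"
    have "RO (ennreal (x j)) (ennreal a)" using lemA[OF n DS DU g P Om j(1)] c Pj[OF j] unfolding x_def by simp
    moreover have "peak_hi RO \<le> ennreal a" unfolding ROlo by simp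
    ultimately show False using SPL_strict_right[OF ROS] \<open>\<not> x j \<le> a\<close> b unfolding strict_def by auto
  qed
  have xs0: "sum x (agents n) = \<Omega>"
    using gp(1) P Om unfolding is_rule_def x_def by blast
  have xs: "sum x (agents n) = real (card (agents n)) * a"
    unfolding xs0 agents_card \<Omega>_def ..
  have xge: "x j \<le> a" if "j \<in> agents n" for j
  proof (cases "j = 1")
    case True then show ?thesis using x1 by simp
  next
    case False then show ?thesis using xj that by simp
  qed
  have xa: "x j = a" if "j \<in> agents n" for j
    by (rule all_eq_le[OF agents_finite xge xs that])
  define y where "y = (\<lambda>j::nat. if j = 1 then b else if j = 2 then 2 * a - b else a)"
  show False
  proof (rule eff_contra[OF gp(3) P Om])
    show "\<forall>i\<in>agents n. 0 \<le> y i" unfolding y_def using b a0 by auto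
    have "sum y (agents n) = y 1 + y 2 + real (n - 2) * a" by (rule sum_12[OF n]) (simp add: y_def)
    then show "(\<Sum>i\<in>agents n. y i) = \<Omega>" unfolding y_def \<Omega>_def using n by (simp add: of_nat_diff algebra_simps)
    have st2: "strict RO (ennreal (2 * a - b)) (ennreal a)"
      by (rule SPL_strict_right[OF ROS]) (use b ROlo in auto)
    show "\<forall>i\<in>agents n. P i (ennreal (y i)) (ennreal (\<phi> P \<Omega> i))"
      unfolding x_def[symmetric]
    proof
      fix i assume i: "i \<in> agents n"
      show "P i (ennreal (y i)) (ennreal (x i))"
      proof (cases "i = 1")
        case True then show ?thesis using ba P1 xa[OF i] by (simp add: y_def)
      next
        case False
        note F = False
        show ?thesis
        proof (cases "i = 2")
          case True then show ?thesis using st2 Pj[OF i F] xa[OF i] unfolding strict_def by (simp add: y_def)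
        next
          case False
          then have "y i = a" unfolding y_def using F by simp
          then show ?thesis using U_refl[OF SPL_U[OF ROS]] Pj[OF i F] xa[OF i] by simp
        qed
      qed
    qed
    show "2 \<in> agents n" by (rule i2)
    show "strict (P 2) (ennreal (y 2)) (ennreal (\<phi> P \<Omega> 2))"
      using st2 Pj[OF i2] xa[OF i2] unfolding x_def by (simp add: y_def)
  qed
qed

lemma fin_ennreal:
  assumes "x < \<infinity>" obtains a where "0 \<le> a" "x = ennreal a"
  using assms by (cases x rule: ennreal_cases) auto

lemma chain:
  assumes RU: "R \<in> U"
    and hyp: "\<And>c c'. 0 \<le> c \<Longrightarrow> h \<le> ennreal c \<Longrightarrow> c < c' \<Longrightarrow> c' \<le> 2 * c \<Longrightarrow> \<not> R (ennreal c') (ennreal c)"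
  shows "0 \<le> c \<Longrightarrow> h \<le> ennreal c \<Longrightarrow> c < c' \<Longrightarrow> c' \<le> 2 ^ k * c \<Longrightarrow> \<not> R (ennreal c') (ennreal c)"
proof (induction k arbitrary: c c')
  case 0 then show ?case by simp
next
  case (Suc k)
  show ?case
  proof (cases "c' \<le> 2 * c")
    case True then show ?thesis using hyp Suc.prems by blast
  next
    case False
    define m where "m = 2 * c"
    have c0: "0 < c"
    proof (rule ccontr)
      assume "\<not> 0 < c"
      then have "c = 0" using Suc.prems by simp
      then show False using Suc.prems by simp
    qed
    have "ennreal c \<le> ennreal m" unfolding m_def using c0 by (intro ennreal_leI) simp
    then have hm: "h \<le> ennreal m" using Suc.prems(2) by (rule order_trans[rotated])
    have "\<not> R (ennreal m) (ennreal c)" using hyp[of c m] Suc.prems c0 unfolding m_def by simp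
    moreover have "\<not> R (ennreal c') (ennreal m)"
    proof (rule Suc.IH)
      show "0 \<le> m" "h \<le> ennreal m" "m < c'" using c0 hm False unfolding m_def by auto
      show "c' \<le> 2 ^ k * m" using Suc.prems(4) unfolding m_def by (simp add: algebra_simps)
    qed
    ultimately show ?thesis
    proof (intro notI)
      assume nm: "\<not> R (ennreal m) (ennreal c)" and nc: "\<not> R (ennreal c') (ennreal m)"
        and cc: "R (ennreal c') (ennreal c)"
      have "R (ennreal c) (ennreal m)" using U_total[OF RU] nm by blast
      then have "R (ennreal c') (ennreal m)" using U_trans[OF RU cc] by blast
      then show False using nc by blast
    qed
  qed
qed

lemma caseII:
  assumes n: "2 \<le> n" and DS: "SPL \<subseteq> D" and DU: "D \<subseteq> U" and g: "good_rule D n \<phi>"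
    and Rb: "Rb \<in> D" and pk: "peak Rb = {peak_lo Rb..peak_hi Rb}"
    and x: "x < \<infinity>" "x' < \<infinity>" and cs: "(x' < x \<and> x \<le> peak_lo Rb) \<or> (peak_hi Rb \<le> x \<and> x < x')"
    and ns: "\<not> strict Rb x x'"
  shows False
proof -
  have RbU: "Rb \<in> U" using Rb DU by auto
  have xx: "Rb x' x" using U_not_strict[OF RbU ns] .
  obtain a where a: "0 \<le> a" "x = ennreal a" using fin_ennreal[OF x(1)] by blast
  obtain b where b: "0 \<le> b" "x' = ennreal b" using fin_ennreal[OF x(2)] by blast
  from cs show False
  proof
    assume l: "x' < x \<and> x \<le> peak_lo Rb"
    then have "b < a" using a b by (simp add: ennreal_less_iff)
    then show False using caseL[OF n DS DU g Rb pk b(1) \<open>b < a\<close>] l xx a b by simp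
  next
    assume r: "peak_hi Rb \<le> x \<and> x < x'"
    then have ab: "a < b" using a b by (simp add: ennreal_less_iff)
    show False
    proof (cases "\<exists>c c'. 0 \<le> c \<and> peak_hi Rb \<le> ennreal c \<and> c < c' \<and> c' \<le> 2 * c \<and> Rb (ennreal c') (ennreal c)")
      case True
      then obtain c c' where cc: "0 \<le> c" "peak_hi Rb \<le> ennreal c" "c < c'" "c' \<le> 2 * c" "Rb (ennreal c') (ennreal c)" by blast
      show False by (rule caseR[OF n DS DU g Rb pk cc(1,3,4,2,5)])
    next
      case False
      then have hyp: "\<And>c c'. 0 \<le> c \<Longrightarrow> peak_hi Rb \<le> ennreal c \<Longrightarrow> c < c' \<Longrightarrow> c' \<le> 2 * c \<Longrightarrow> \<not> Rb (ennreal c') (ennreal c)"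
        by blast
      have a0: "0 < a"
      proof (rule ccontr)
        assume "\<not> 0 < a"
        then have "a = 0" using a by simp
        then have "peak_hi Rb = 0" using r a by simp
        then have "ennreal 0 \<in> peak Rb" using peak_hi_in[OF RbU] by simp
        then have "x' \<in> peak Rb" using in_peak_trans[OF RbU] xx a \<open>a = 0\<close> by simp
        then have "x' \<le> peak_hi Rb" by (rule peak_hi_ge)
        then show False using \<open>peak_hi Rb = 0\<close> r a \<open>a = 0\<close> by simp
      qed
      obtain k where k: "b / a < 2 ^ k" using real_arch_pow[of 2 "b / a"] by auto
      then have "b \<le> 2 ^ k * a" using a0 by (simp add: divide_less_eq)
      then have "\<not> Rb (ennreal b) (ennreal a)"
        using chain[OF RbU hyp a(1) _ ab] r a by simp
      then show False using xx a b by simp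
    qed
  qed
qed

lemma fam_left: "sig t \<le> A \<Longrightarrow> fam A A k t = -(A - sig t)"
  unfolding fam_def by simp

lemma fam_right: "A \<le> sig t \<Longrightarrow> fam A A k t = -(k * (sig t - A))"
  unfolding fam_def by simp

lemma pfam_iff: "pfam q q k x y \<longleftrightarrow> fam (sig q) (sig q) k y \<le> fam (sig q) (sig q) k x"
  unfolding pfam_def upref_def by simp

lemma pfam_strict_iff: "strict (pfam q q k) x y \<longleftrightarrow> fam (sig q) (sig q) k y < fam (sig q) (sig q) k x"
  unfolding pfam_def upref_strict by simp

lemma find_c:
  assumes RU: "R \<in> U" and hi: "peak_hi R \<in> peak R" and z: "z \<notin> peak R" "z < peak_hi R"
    and zr: "z = ennreal zr" "0 \<le> zr"
  shows "\<exists>c. zr < c \<and> strict R (ennreal c) (ennreal zr)"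
proof -
  have nz: "\<not> R z y" if "y \<in> peak R" for y
    using in_peak_trans[OF RU that] z(1) by blast
  show ?thesis
  proof (cases "peak_hi R < \<infinity>")
    case True
    then obtain h where h: "0 \<le> h" "peak_hi R = ennreal h" by (rule fin_ennreal)
    have "zr < h" using z(2) zr h by (simp add: ennreal_less_iff)
    moreover have "strict R (ennreal h) (ennreal zr)"
      unfolding strict_def using peak_best[OF hi] nz[OF hi] h zr by simp
    ultimately show ?thesis by blast
  next
    case False
    then have hinf: "peak_hi R = \<infinity>" using top.not_eq_extremum by fastforce
    define S where "S = - {y. R z y}"
    have oS: "open S" unfolding S_def using U_closed2[OF RU] by (simp add: open_Compl)
    have iS: "top \<in> S" unfolding S_def using nz[OF hi] hinf by simp
    have zt: "z < top" using z(2) hinf by simp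
    obtain b where b: "b < top" "{b <.. top} \<subseteq> S" using open_left[OF oS iS zt] by blast
    define m where "m = max b z"
    have mt: "m < top" unfolding m_def using b zt by simp
    define c where "c = enn2real m + 1"
    have mc: "m < ennreal c" unfolding c_def using mt
      by (metis ennreal_enn2real ennreal_less_iff enn2real_nonneg less_add_one ennreal_plus zero_le_one)
    then have "ennreal c \<in> S" using b m_def by auto
    then have "\<not> R z (ennreal c)" unfolding S_def by simp
    then have st: "strict R (ennreal c) z" by (rule U_not_R[OF RU])
    have "ennreal zr < ennreal c" using mc zr unfolding m_def by simp
    then have "zr < c" using zr by (simp add: ennreal_less_iff)
    then show ?thesis using st zr by blast
  qed
qed

lemma caseI_core:
  assumes n: "2 \<le> n" and DS: "SPL \<subseteq> D" and DU: "D \<subseteq> U" and g: "good_rule D n \<phi>"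
    and Rb: "Rb \<in> D" and l: "0 \<le> l" "l < zr" "ennreal l \<in> peak Rb"
    and cz: "zr < c" "strict Rb (ennreal c) (ennreal zr)"
  shows False
proof -
  note gp = good_parts[OF g]
  have RbU: "Rb \<in> U" using Rb DU by auto
  have c0: "0 < c" using l cz by simp
  define \<Omega> where "\<Omega> = real n * c"
  have Om: "0 < \<Omega>" unfolding \<Omega>_def using n c0 by simp
  have cc: "\<Omega> / real n = c" unfolding \<Omega>_def using n by simp
  define q where "q = 2 * c - zr"
  have cq: "c < q" unfolding q_def using cz by simp
  define Q where "Q = (\<lambda>k. pfam (ennreal q) (ennreal q) k)"
  define C where "C = pfam (ennreal c) (ennreal c) 1"
  have QS: "Q k \<in> SPL" if "0 < k" for k unfolding Q_def by (rule pfam_SPL) (use that in auto)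
  have QD: "Q k \<in> D" if "0 < k" for k using QS[OF that] DS by auto
  have Qpk: "peak (Q k) = {ennreal q}" if "0 < k" for k unfolding Q_def using peak_pfam[of "ennreal q" "ennreal q" k] that by simp
  have Qlo: "peak_lo (Q k) = ennreal q" if "0 < k" for k unfolding Q_def using pfam_lo_hi[of "ennreal q" "ennreal q" k] that by simp
  have CS: "C \<in> SPL" unfolding C_def by (rule pfam_SPL) auto
  have CD: "C \<in> D" using CS DS by auto
  have Cpk: "peak C = {ennreal (\<Omega> / real n)}" unfolding C_def cc using peak_pfam[of "ennreal c" "ennreal c" 1] by simp
  define f where "f = (\<lambda>k j::nat. if j = 1 then Rb else if j = 2 then Q k else C)"
  define P where "P = (\<lambda>k. mkprof n (f k))"
  have i1: "1 \<in> agents n" and i2: "2 \<in> agents n" using agents_12[OF n] by auto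
  have P: "P k \<in> profiles D n" if "0 < k" for k unfolding P_def
    by (rule mkprof_in) (use Rb QD[OF that] CD in \<open>auto simp: f_def\<close>)
  have P1: "P k 1 = Rb" for k unfolding P_def f_def using mkprof_app[OF i1] by simp
  have P2: "P k 2 = Q k" for k unfolding P_def f_def using mkprof_app[OF i2] by simp
  have Pj: "P k j = C" if "j \<in> agents n" "j \<noteq> 1" "j \<noteq> 2" for k j
    unfolding P_def f_def using mkprof_app[OF that(1)] that by simp
  have Pupd: "(P 1)(2 := Q k) = P k" for k
    unfolding P_def mkprof_upd[OF i2] by (rule arg_cong[where f="mkprof n"]) (auto simp: f_def fun_eq_iff)
  define X where "X = \<phi> (P 1) \<Omega> 2"
  have PX: "\<phi> (P k) \<Omega> 2 = X" if "0 < k" for k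
  proof -
    have "\<phi> (P 1) \<Omega> 2 = \<phi> ((P 1)(2 := Q k)) \<Omega> 2"
      by (rule opo_use[OF gp(2) P[of 1] Om i2 QD[OF that]]) (simp_all add: P2 Qpk that)
    then show ?thesis unfolding X_def Pupd by simp
  qed
  have Poth: "\<phi> (P k) \<Omega> j = c" if "0 < k" "j \<in> agents n" "j \<noteq> 1" "j \<noteq> 2" for k j
    unfolding cc[symmetric]
    by (rule EDG_peak[OF gp(1) gp(4) P[OF that(1)] Om that(2)]) (use Pj[OF that(2-4)] CS SPL_U Cpk n in auto)
  have P1v: "\<phi> (P k) \<Omega> 1 = 2 * c - X" if "0 < k" for k
  proof -
    have "sum (\<phi> (P k) \<Omega>) (agents n) = \<phi> (P k) \<Omega> 1 + \<phi> (P k) \<Omega> 2 + real (n - 2) * c"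
      by (rule sum_12[OF n]) (use Poth that in auto)
    moreover have "sum (\<phi> (P k) \<Omega>) (agents n) = \<Omega>" using gp(1) P[OF that] Om unfolding is_rule_def by blast
    ultimately show ?thesis using PX[OF that] n unfolding \<Omega>_def by (simp add: of_nat_diff algebra_simps)
  qed
  have A2: "Q k (ennreal X) (ennreal c)" if "0 < k" for k
    using lemA[OF n DS DU g P[OF that] Om i2] P2 PX[OF that] cc by simp
  have X0: "0 \<le> X" using gp(1) P[of 1] Om i2 unfolding is_rule_def X_def by simp
  have Xc: "c \<le> X"
  proof (rule ccontr)
    assume "\<not> c \<le> X"
    moreover have "ennreal c \<le> ennreal q" using cq by (intro ennreal_leI) simp
    ultimately have "strict (Q 1) (ennreal c) (ennreal X)"
      using SPL_strict_left[OF QS[of 1] X0, of c] Qlo[of 1] by simp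
    then show False using A2[of 1] unfolding strict_def by simp
  qed
  have sq: "sig (ennreal c) < sig (ennreal q)" using cq c0 by (simp add: sig_less_iff ennreal_less_iff)
  have Xq: "X \<le> q"
  proof (rule ccontr)
    assume "\<not> X \<le> q"
    then have sX: "sig (ennreal q) < sig (ennreal X)" using cq c0 by (simp add: sig_less_iff ennreal_less_iff)
    define K where "K = (sig (ennreal q) - sig (ennreal c)) / (sig (ennreal X) - sig (ennreal q)) + 1"
    have K0: "0 < K" unfolding K_def using sq sX by (simp add: add_pos_nonneg)
    have e1: "fam (sig (ennreal q)) (sig (ennreal q)) K (ennreal c) = -(sig (ennreal q) - sig (ennreal c))"
      by (rule fam_left) (use sq in simp)
    have e2: "fam (sig (ennreal q)) (sig (ennreal q)) K (ennreal X) = -(K * (sig (ennreal X) - sig (ennreal q)))"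
      by (rule fam_right) (use sX in simp)
    have "K * (sig (ennreal X) - sig (ennreal q)) = (sig (ennreal q) - sig (ennreal c)) + (sig (ennreal X) - sig (ennreal q))"
      unfolding K_def using sX by (simp add: field_simps)
    then have "fam (sig (ennreal q)) (sig (ennreal q)) K (ennreal X) < fam (sig (ennreal q)) (sig (ennreal q)) K (ennreal c)"
      using e1 e2 sX by simp
    then show False using A2[OF K0] unfolding Q_def pfam_iff by simp
  qed
  have A1: "Rb (ennreal (2 * c - X)) (ennreal c)"
    using lemA[OF n DS DU g P[of 1] Om i1] P1 P1v[of 1] cc by simp
  have Xq': "X < q"
  proof (rule ccontr)
    assume "\<not> X < q"
    then have "X = q" using Xq by simp
    then have "2 * c - X = zr" unfolding q_def by simp
    then show False using A1 cz(2) unfolding strict_def by simp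
  qed
  have sXq: "sig (ennreal X) < sig (ennreal q)" using Xq' X0 by (simp add: sig_less_iff ennreal_less_iff)
  have ql: "q < 2 * c - l" unfolding q_def using l by simp
  have sql: "sig (ennreal q) < sig (ennreal (2 * c - l))" using ql cq c0 by (simp add: sig_less_iff ennreal_less_iff)
  define K where "K = (sig (ennreal q) - sig (ennreal X)) / (2 * (sig (ennreal (2 * c - l)) - sig (ennreal q)))"
  have K0: "0 < K" unfolding K_def using sXq sql by simp
  have st2: "strict (Q K) (ennreal (2 * c - l)) (ennreal X)"
  proof -
    have e1: "fam (sig (ennreal q)) (sig (ennreal q)) K (ennreal X) = -(sig (ennreal q) - sig (ennreal X))"
      by (rule fam_left) (use sXq in simp)
    have e2: "fam (sig (ennreal q)) (sig (ennreal q)) K (ennreal (2 * c - l)) = -(K * (sig (ennreal (2 * c - l)) - sig (ennreal q)))"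
      by (rule fam_right) (use sql in simp)
    have "K * (sig (ennreal (2 * c - l)) - sig (ennreal q)) = (sig (ennreal q) - sig (ennreal X)) / 2"
      unfolding K_def using sql by (simp add: field_simps)
    then show ?thesis unfolding Q_def pfam_strict_iff e1 e2 using sXq by simp
  qed
  define y where "y = (\<lambda>j::nat. if j = 1 then l else if j = 2 then 2 * c - l else c)"
  have xv: "\<phi> (P K) \<Omega> j = (if j = 1 then 2 * c - X else if j = 2 then X else c)" if "j \<in> agents n" for j
    using P1v[OF K0] PX[OF K0] Poth[OF K0 that] by simp
  show False
  proof (rule eff_contra[OF gp(3) P[OF K0] Om])
    show "\<forall>i\<in>agents n. 0 \<le> y i" unfolding y_def using l c0 cz by auto
    have "sum y (agents n) = y 1 + y 2 + real (n - 2) * c" by (rule sum_12[OF n]) (simp add: y_def)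
    then show "(\<Sum>i\<in>agents n. y i) = \<Omega>" unfolding y_def \<Omega>_def using n by (simp add: of_nat_diff algebra_simps)
    show "\<forall>i\<in>agents n. P K i (ennreal (y i)) (ennreal (\<phi> (P K) \<Omega> i))"
    proof
      fix i assume i: "i \<in> agents n"
      show "P K i (ennreal (y i)) (ennreal (\<phi> (P K) \<Omega> i))"
      proof (cases "i = 1")
        case True
        then have "y i = l" unfolding y_def by simp
        then show ?thesis using True P1 peak_best[OF l(3)] by simp
      next
        case F: False
        show ?thesis
        proof (cases "i = 2")
          case True
          then have "y i = 2 * c - l" "\<phi> (P K) \<Omega> i = X" using xv[OF i] unfolding y_def by auto
          then show ?thesis using st2 True P2 unfolding strict_def by simp
        next
          case False
          then have "y i = c" "\<phi> (P K) \<Omega> i = c" using xv[OF i] F unfolding y_def by auto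
          then show ?thesis using U_refl[OF SPL_U[OF CS]] Pj[OF i F False] by simp
        qed
      qed
    qed
    show "2 \<in> agents n" by (rule i2)
    have "y 2 = 2 * c - l" "\<phi> (P K) \<Omega> 2 = X" using xv[OF i2] unfolding y_def by auto
    then show "strict (P K 2) (ennreal (y 2)) (ennreal (\<phi> (P K) \<Omega> 2))" using st2 P2 by simp
  qed
qed

lemma caseI:
  assumes n: "2 \<le> n" and DS: "SPL \<subseteq> D" and DU: "D \<subseteq> U" and g: "good_rule D n \<phi>"
    and Rb: "Rb \<in> D" and npk: "peak Rb \<noteq> {peak_lo Rb..peak_hi Rb}"
  shows False
proof -
  have RbU: "Rb \<in> U" using Rb DU by auto
  have loin: "peak_lo Rb \<in> peak Rb" and hiin: "peak_hi Rb \<in> peak Rb"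
    using peak_lo_in[OF RbU] peak_hi_in[OF RbU] .
  have sub: "peak Rb \<subseteq> {peak_lo Rb..peak_hi Rb}" using peak_lo_le peak_hi_ge by auto
  then obtain z where z: "z \<in> {peak_lo Rb..peak_hi Rb}" "z \<notin> peak Rb" using npk by blast
  have lz: "peak_lo Rb < z" using z loin by (metis atLeastAtMost_iff order_le_less)
  have zh: "z < peak_hi Rb" using z hiin by (metis atLeastAtMost_iff order_le_less)
  have "z < \<infinity>" using zh top.not_eq_extremum by fastforce
  then obtain zr where zr: "0 \<le> zr" "z = ennreal zr" by (rule fin_ennreal)
  have "peak_lo Rb < \<infinity>" using lz \<open>z < \<infinity>\<close> by simp
  then obtain l where l: "0 \<le> l" "peak_lo Rb = ennreal l" by (rule fin_ennreal)
  have "l < zr" using lz l zr by (simp add: ennreal_less_iff)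
  obtain c where c: "zr < c" "strict Rb (ennreal c) (ennreal zr)"
    using find_c[OF RbU hiin z(2) zh zr(2,1)] by blast
  show False
    by (rule caseI_core[OF n DS DU g Rb l(1) \<open>l < zr\<close> _ c]) (use loin l in simp)
qed

theorem part3:
  assumes n: "2 \<le> n"
  shows "\<forall>D. SPL \<subset> D \<and> D \<subseteq> U \<longrightarrow> \<not> (\<exists>\<phi>. good_rule D n \<phi>)"
proof (intro allI impI notI)
  fix D assume D: "SPL \<subset> D \<and> D \<subseteq> U" and "\<exists>\<phi>. good_rule D n \<phi>"
  then obtain \<phi> where g: "good_rule D n \<phi>" by blast
  have DS: "SPL \<subseteq> D" and DU: "D \<subseteq> U" using D by auto
  obtain Rb where Rb: "Rb \<in> D" "Rb \<notin> SPL" using D by blast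
  have RbU: "Rb \<in> U" using Rb DU by auto
  show False
  proof (cases "peak Rb = {peak_lo Rb..peak_hi Rb}")
    case False
    then show False by (rule caseI[OF n DS DU g Rb(1)])
  next
    case pk: True
    have "\<not> (\<forall>x x'. x < \<infinity> \<longrightarrow> x' < \<infinity> \<longrightarrow>
         ((x' < x \<and> x \<le> peak_lo Rb) \<or> (peak_hi Rb \<le> x \<and> x < x')) \<longrightarrow> strict Rb x x')"
    proof
      assume "\<forall>x x'. x < \<infinity> \<longrightarrow> x' < \<infinity> \<longrightarrow>
         ((x' < x \<and> x \<le> peak_lo Rb) \<or> (peak_hi Rb \<le> x \<and> x < x')) \<longrightarrow> strict Rb x x'"
      then have "Rb \<in> SPL" unfolding SPL_def using RbU pk by blast
      then show False using Rb by blast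
    qed
    then obtain x x' where x: "x < \<infinity>" "x' < \<infinity>"
      "(x' < x \<and> x \<le> peak_lo Rb) \<or> (peak_hi Rb \<le> x \<and> x < x')" "\<not> strict Rb x x'" by blast
    show False by (rule caseII[OF n DS DU g Rb(1) pk x])
  qed
qed

theorem theorem3:
  fixes n :: nat
  assumes "2 \<le> n"
  shows "SP \<subseteq> SPL \<and> (\<exists>\<phi>. good_rule SPL n \<phi>) \<and>
         (\<forall>D. SPL \<subset> D \<and> D \<subseteq> U \<longrightarrow> \<not> (\<exists>\<phi>. good_rule D n \<phi>))"
  using SP_sub_SPL part2[OF assms] part3[OF assms] by blast

end
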